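(* Let $A$ be a finite set with $q:=|A|\ge 2$ and let $n\ge 2$ be an integer. (a) Unless $q=n=2$, the symmetric group $\mathrm{Sym}(A^n)$ is generated by $n$ instructions. (b) If $q\ge 3$, then the alternating group $\mathrm{Alt}(A^n)$ is generated by $n$ instructions (i.e. there exist $n$ instructions, each an even permutation of $A^n$, which generate $\mathrm{Alt}(A^n)$).
   Context: Elements of $A^n$ are written $x=(x_1,\ldots,x_n)$. Any $f\in\mathrm{Sym}(A^n)$ is written $f(x)=(f_1(x),\ldots,f_n(x))$ with coordinate functions $f_i:A^n\to A$; the $i$-th coordinate function is trivial if $f_i(x)=x_i$ for all $x$. An instruction is a permutation $g$ of $A^n$ with at most one nontrivial coordinate function, i.e. $g(x)=(x_1,\ldots,x_{j-1},g_j(x),x_{j+1},\ldots,x_n)$ for some $j$ (it is said to update register $j$); by convention the identity is also an instruction. *)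

theory Defs
  imports "HOL-Library.FuncSet" "HOL-Combinatorics.Permutations"
begin

definition cube :: "'a set \<Rightarrow> nat \<Rightarrow> (nat \<Rightarrow> 'a) set" where
  "cube A n = PiE {..<n} (\<lambda>_. A)"

definition Sym_set :: "'a set \<Rightarrow> nat \<Rightarrow> ((nat \<Rightarrow> 'a) \<Rightarrow> (nat \<Rightarrow> 'a)) set" where
  "Sym_set A n = {p. p permutes cube A n}"

definition Alt_set :: "'a set \<Rightarrow> nat \<Rightarrow> ((nat \<Rightarrow> 'a) \<Rightarrow> (nat \<Rightarrow> 'a)) set" where
  "Alt_set A n = {p. p permutes cube A n \<and> evenperm p}"

definition instruction :: "'a set \<Rightarrow> nat \<Rightarrow> ((nat \<Rightarrow> 'a) \<Rightarrow> (nat \<Rightarrow> 'a)) \<Rightarrow> bool" where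
  "instruction A n g \<longleftrightarrow> g permutes cube A n \<and>
     (g = id \<or> (\<exists>j<n. \<forall>x\<in>cube A n. \<forall>i<n. i \<noteq> j \<longrightarrow> g x i = x i))"

inductive_set perm_gen :: "('b \<Rightarrow> 'b) set \<Rightarrow> ('b \<Rightarrow> 'b) set" for S where
  gen_id: "id \<in> perm_gen S"
| gen_base: "g \<in> S \<Longrightarrow> g \<in> perm_gen S"
| gen_comp: "f \<in> perm_gen S \<Longrightarrow> g \<in> perm_gen S \<Longrightarrow> f \<circ> g \<in> perm_gen S"
| gen_inv: "f \<in> perm_gen S \<Longrightarrow> inv f \<in> perm_gen S"

end

theory Submission
  imports Defs
begin


lemma pg_funpow: "f \<in> perm_gen S \<Longrightarrow> f ^^ k \<in> perm_gen S"
  by (induction k) (auto intro: perm_gen.intros)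

lemma pg_permutes:
  assumes "\<forall>s\<in>S. s permutes X" "h \<in> perm_gen S" shows "h permutes X"
  using assms(2)
proof induction
  case gen_id show ?case by (rule permutes_id)
next
  case (gen_base g) thus ?case using assms(1) by blast
next
  case (gen_comp f g) thus ?case by (metis permutes_compose)
next
  case (gen_inv f) show ?case using gen_inv.IH by (rule permutes_inv)
qed

lemma pg_even:
  assumes fin: "finite X" and "\<forall>s\<in>S. s permutes X \<and> evenperm s" and "h \<in> perm_gen S"
  shows "evenperm h"
proof -
  have P: "\<And>h. h \<in> perm_gen S \<Longrightarrow> permutation h"
    using pg_permutes[of S X] assms permutation_permutes by blast
  show ?thesis using assms(3)
  proof induction
    case (gen_comp f g) thus ?case using P evenperm_comp by (metis gen_comp.hyps)
  next
    case (gen_inv f) thus ?case using P evenperm_inv by metis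
  qed (use assms(2) in auto)
qed

lemma conj_transpose:
  assumes "bij h" shows "h \<circ> transpose a b \<circ> inv h = transpose (h a) (h b)"
proof (rule ext)
  fix x
  have hx: "h (inv h x) = x" using assms by (meson bij_is_surj surj_f_inv_f)
  have e1: "inv h x = a \<longleftrightarrow> x = h a" using assms hx by (metis bij_inv_eq_iff)
  have e2: "inv h x = b \<longleftrightarrow> x = h b" using assms hx by (metis bij_inv_eq_iff)
  show "(h \<circ> transpose a b \<circ> inv h) x = transpose (h a) (h b) x"
    unfolding transpose_def o_def using e1 e2 hx by auto
qed

definition P2 :: "('b \<Rightarrow> 'b) set \<Rightarrow> 'b set \<Rightarrow> bool" where
  "P2 H Z \<longleftrightarrow> (\<forall>a\<in>Z. \<forall>b\<in>Z. \<forall>c\<in>Z. \<forall>d\<in>Z. a \<noteq> b \<longrightarrow> c \<noteq> d \<longrightarrow> transpose a b \<circ> transpose c d \<in> H)"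

lemma P2D: "P2 H Z \<Longrightarrow> a \<in> Z \<Longrightarrow> b \<in> Z \<Longrightarrow> c \<in> Z \<Longrightarrow> d \<in> Z \<Longrightarrow> a \<noteq> b \<Longrightarrow> c \<noteq> d \<Longrightarrow>
   transpose a b \<circ> transpose c d \<in> H"
  unfolding P2_def by blast

lemma P2_image:
  assumes S: "\<forall>s\<in>S. s permutes X" and h: "h \<in> perm_gen S" and P: "P2 (perm_gen S) Z"
  shows "P2 (perm_gen S) (h ` Z)"
  unfolding P2_def
proof (intro ballI impI)
  fix a b c d assume ab: "a \<in> h ` Z" "b \<in> h ` Z" "c \<in> h ` Z" "d \<in> h ` Z" "a \<noteq> b" "c \<noteq> d"
  then obtain a' b' c' d' where a': "a' \<in> Z" "b' \<in> Z" "c' \<in> Z" "d' \<in> Z" "a = h a'" "b = h b'" "c = h c'" "d = h d'"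
    by blast
  have hp: "h permutes X" using pg_permutes S h by blast
  hence bh: "bij h" using permutes_bij by blast
  have "a' \<noteq> b'" "c' \<noteq> d'" using ab a' by auto
  hence in1: "transpose a' b' \<circ> transpose c' d' \<in> perm_gen S" using P a' unfolding P2_def by blast
  have "h \<circ> (transpose a' b' \<circ> transpose c' d') \<circ> inv h = (h \<circ> transpose a' b' \<circ> inv h) \<circ> (h \<circ> transpose c' d' \<circ> inv h)"
    using bh by (simp add: fun_eq_iff bij_is_inj)
  also have "\<dots> = transpose a b \<circ> transpose c d" using conj_transpose[OF bh] a' by simp
  finally have eq: "h \<circ> (transpose a' b' \<circ> transpose c' d') \<circ> inv h = transpose a b \<circ> transpose c d" .
  have "h \<circ> (transpose a' b' \<circ> transpose c' d') \<circ> inv h \<in> perm_gen S"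
    by (rule perm_gen.gen_comp[OF perm_gen.gen_comp[OF h in1] perm_gen.gen_inv[OF h]])
  thus "transpose a b \<circ> transpose c d \<in> perm_gen S" using eq by simp
qed

lemma P2_merge:
  assumes PY: "P2 (perm_gen S) Y" and PY': "P2 (perm_gen S) Y'" and ef: "e \<in> Y" "e \<in> Y'" "f \<in> Y" "f \<in> Y'" "e \<noteq> f"
  shows "P2 (perm_gen S) (Y \<union> Y')"
proof -
  let ?H = "perm_gen S"
  have comp: "\<And>x y. x \<in> ?H \<Longrightarrow> y \<in> ?H \<Longrightarrow> x \<circ> y \<in> ?H" by (rule perm_gen.gen_comp)
  have key: "transpose a b \<circ> transpose e f \<in> ?H" if "a \<in> Y \<union> Y'" "b \<in> Y \<union> Y'" "a \<noteq> b" for a b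
  proof -
    have cross: "transpose a b \<circ> transpose e f \<in> ?H" if a: "a \<in> Y" "a \<notin> Y'" and b: "b \<in> Y'" "b \<notin> Y" for a b
    proof -
      have ne: "a \<noteq> e" "a \<noteq> f" "b \<noteq> e" "b \<noteq> f" "a \<noteq> b" using a b ef by auto
      have eq: "transpose a b \<circ> transpose e f =
          (transpose a e \<circ> transpose e f) \<circ> (transpose e f \<circ> transpose e b) \<circ> (transpose a e \<circ> transpose e f)"
        using ne ef(5) by (auto simp: fun_eq_iff transpose_def)
      have 1: "transpose a e \<circ> transpose e f \<in> ?H" using ne ef(5) by (intro P2D[OF PY a(1) ef(1) ef(1) ef(3)]) auto
      have 2: "transpose e f \<circ> transpose e b \<in> ?H" using ne ef(5) by (intro P2D[OF PY' ef(2) ef(4) ef(2) b(1)]) auto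
      show ?thesis unfolding eq by (rule comp[OF comp[OF 1 2] 1])
    qed
    show ?thesis
    proof (cases "a \<in> Y \<and> b \<in> Y")
      case True thus ?thesis using that ef by (intro P2D[OF PY]) auto
    next
      case F1: False
      show ?thesis
      proof (cases "a \<in> Y' \<and> b \<in> Y'")
        case True thus ?thesis using that ef by (intro P2D[OF PY']) auto
      next
        case False
        hence "(a \<in> Y \<and> a \<notin> Y' \<and> b \<in> Y' \<and> b \<notin> Y) \<or> (b \<in> Y \<and> b \<notin> Y' \<and> a \<in> Y' \<and> a \<notin> Y)"
          using F1 that by blast
        thus ?thesis
        proof
          assume "a \<in> Y \<and> a \<notin> Y' \<and> b \<in> Y' \<and> b \<notin> Y" thus ?thesis using cross[of a b] by blast
        next
          assume "b \<in> Y \<and> b \<notin> Y' \<and> a \<in> Y' \<and> a \<notin> Y"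
          hence "transpose b a \<circ> transpose e f \<in> ?H" using cross[of b a] by blast
          thus ?thesis by (simp add: transpose_commute)
        qed
      qed
    qed
  qed
  show ?thesis unfolding P2_def
  proof (intro ballI impI)
    fix a b c d assume h: "a \<in> Y \<union> Y'" "b \<in> Y \<union> Y'" "c \<in> Y \<union> Y'" "d \<in> Y \<union> Y'" "a \<noteq> b" "c \<noteq> d"
    have iv: "inv (transpose c d \<circ> transpose e f) = transpose e f \<circ> transpose c d"
      by (simp add: o_inv_distrib)
    have eq: "transpose a b \<circ> transpose c d = (transpose a b \<circ> transpose e f) \<circ> inv (transpose c d \<circ> transpose e f)"
      unfolding iv by (simp add: fun_eq_iff)
    have "transpose c d \<circ> transpose e f \<in> ?H" using key h(3,4,6) by blast
    hence X2: "inv (transpose c d \<circ> transpose e f) \<in> ?H" by (rule perm_gen.gen_inv)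
    have X1: "transpose a b \<circ> transpose e f \<in> ?H" using key h(1,2,5) by blast
    show "transpose a b \<circ> transpose c d \<in> ?H" by (subst eq) (rule comp[OF X1 X2])
  qed
qed



lemma P2_three:
  assumes d: "a \<noteq> b" "a \<noteq> c" "b \<noteq> c" and c3: "transpose a c \<circ> transpose a b \<in> perm_gen S"
  shows "P2 (perm_gen S) {a, b, c}"
proof -
  let ?H = "perm_gen S"
  let ?c = "transpose a c \<circ> transpose a b"
  have c2: "?c \<circ> ?c \<in> ?H" by (rule perm_gen.gen_comp[OF c3 c3])
  have i: "id \<in> ?H" by (rule perm_gen.gen_id)
  let ?T = "{transpose a b, transpose a c, transpose b c}"
  have T: "transpose x y \<in> ?T" if "x \<in> {a,b,c}" "y \<in> {a,b,c}" "x \<noteq> y" for x y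
    using that by (auto simp: transpose_commute)
  have e1: "transpose a b \<circ> transpose a b = id" "transpose a c \<circ> transpose a c = id"
    "transpose b c \<circ> transpose b c = id" by auto
  have e2: "transpose a c \<circ> transpose a b = ?c" by simp
  have e3: "transpose a b \<circ> transpose a c = ?c \<circ> ?c" using d by (auto simp: fun_eq_iff transpose_def)
  have e4: "transpose b c \<circ> transpose a b = ?c \<circ> ?c" using d by (auto simp: fun_eq_iff transpose_def)
  have e5: "transpose a b \<circ> transpose b c = ?c" using d by (auto simp: fun_eq_iff transpose_def)
  have e6: "transpose b c \<circ> transpose a c = ?c" using d by (auto simp: fun_eq_iff transpose_def)
  have e7: "transpose a c \<circ> transpose b c = ?c \<circ> ?c" using d by (auto simp: fun_eq_iff transpose_def)
  have all: "u \<circ> v \<in> ?H" if "u \<in> ?T" "v \<in> ?T" for u v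
  proof -
    from that have "u = transpose a b \<or> u = transpose a c \<or> u = transpose b c"
      "v = transpose a b \<or> v = transpose a c \<or> v = transpose b c" by blast+
    thus ?thesis by (elim disjE) (simp_all only: e1 e3 e4 e5 e6 e7 c3 c2 i)
  qed
  show ?thesis unfolding P2_def
  proof (intro ballI impI)
    fix x y z w assume "x \<in> {a,b,c}" "y \<in> {a,b,c}" "z \<in> {a,b,c}" "w \<in> {a,b,c}" "x \<noteq> y" "z \<noteq> w"
    thus "transpose x y \<circ> transpose z w \<in> ?H" by (intro all T)
  qed
qed

lemma commutator_3cycle:
  assumes ba: "bij \<alpha>" and bb: "bij \<beta>" and ap: "\<alpha> p \<noteq> p" and bp: "\<beta> p \<noteq> p"
    and disj: "\<And>x. \<alpha> x \<noteq> x \<Longrightarrow> \<beta> x \<noteq> x \<Longrightarrow> x = p"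
  shows "\<alpha> \<circ> \<beta> \<circ> inv \<alpha> \<circ> inv \<beta> = transpose p (\<beta> p) \<circ> transpose p (\<alpha> p)"
proof (rule ext)
  fix x
  have ia: "\<And>y. inv \<alpha> (\<alpha> y) = y" using ba by (simp add: bij_is_inj)
  have ib: "\<And>y. inv \<beta> (\<beta> y) = y" using bb by (simp add: bij_is_inj)
  have ai: "\<And>y. \<alpha> (inv \<alpha> y) = y" using ba by (meson bij_is_surj surj_f_inv_f)
  have bi: "\<And>y. \<beta> (inv \<beta> y) = y" using bb by (meson bij_is_surj surj_f_inv_f)
  have injA: "\<And>y z. \<alpha> y = \<alpha> z \<longleftrightarrow> y = z" using ba by (meson bij_is_inj inj_eq)
  have injB: "\<And>y z. \<beta> y = \<beta> z \<longleftrightarrow> y = z" using bb by (meson bij_is_inj inj_eq)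
  have mA: "\<And>y. \<alpha> y \<noteq> y \<Longrightarrow> \<alpha> (\<alpha> y) \<noteq> \<alpha> y" using injA by blast
  have mB: "\<And>y. \<beta> y \<noteq> y \<Longrightarrow> \<beta> (\<beta> y) \<noteq> \<beta> y" using injB by blast
  have fixA: "\<And>y. \<beta> y \<noteq> y \<Longrightarrow> y \<noteq> p \<Longrightarrow> \<alpha> y = y" using disj by blast
  have fixB: "\<And>y. \<alpha> y \<noteq> y \<Longrightarrow> y \<noteq> p \<Longrightarrow> \<beta> y = y" using disj by blast
  have fa: "\<alpha> (\<beta> p) = \<beta> p" using fixA[OF mB[OF bp] bp[symmetric, THEN not_sym]] by simp
  have fb: "\<beta> (\<alpha> p) = \<alpha> p" using fixB[OF mA[OF ap] ap[symmetric, THEN not_sym]] by simp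
  have ab: "\<alpha> p \<noteq> \<beta> p"
  proof
    assume eq: "\<alpha> p = \<beta> p"
    have "\<alpha> (\<alpha> p) = \<alpha> p" using fa eq by simp
    thus False using mA[OF ap] by simp
  qed
  have iaf: "inv \<alpha> (\<beta> p) = \<beta> p" using ia[of "\<beta> p"] fa by simp
  have ibf: "inv \<beta> (\<alpha> p) = \<alpha> p" using ib[of "\<alpha> p"] fb by simp
  have ibp: "inv \<beta> p \<noteq> p"
  proof
    assume "inv \<beta> p = p" hence "\<beta> p = p" using bi[of p] by simp
    thus False using bp by simp
  qed
  have iap: "inv \<alpha> p \<noteq> p"
  proof
    assume "inv \<alpha> p = p" hence "\<alpha> p = p" using ai[of p] by simp
    thus False using ap by simp
  qed
  have ibp2: "\<beta> (inv \<beta> p) \<noteq> inv \<beta> p" using bi[of p] ibp by simp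
  have iap2: "\<alpha> (inv \<alpha> p) \<noteq> inv \<alpha> p" using ai[of p] iap by simp
  have fa2': "\<alpha> (inv \<beta> p) = inv \<beta> p" using fixA[OF ibp2 ibp] .
  have fa2: "inv \<alpha> (inv \<beta> p) = inv \<beta> p" using ia[of "inv \<beta> p"] fa2' by simp
  have fb2: "\<beta> (inv \<alpha> p) = inv \<alpha> p" using fixB[OF iap2 iap] .
  show "(\<alpha> \<circ> \<beta> \<circ> inv \<alpha> \<circ> inv \<beta>) x = (transpose p (\<beta> p) \<circ> transpose p (\<alpha> p)) x"
  proof (cases "x = p")
    case True thus ?thesis using fa2 bi ab ap by (simp add: transpose_def)
  next
    case xp: False
    show ?thesis
    proof (cases "x = \<alpha> p")
      case True thus ?thesis using ibf ia fb fa ab ap bp xp by (simp add: transpose_def)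
    next
      case xa: False
      show ?thesis
      proof (cases "x = \<beta> p")
        case True thus ?thesis using ib fb2 ai ab ap bp xp by (simp add: transpose_def)
      next
        case xb: False
        have rhs: "(transpose p (\<beta> p) \<circ> transpose p (\<alpha> p)) x = x" using xp xa xb by (simp add: transpose_def)
        show ?thesis
        proof (cases "\<beta> x = x")
          case bx: True
          hence ibx: "inv \<beta> x = x" using ib[of x] by simp
          show ?thesis
          proof (cases "\<alpha> x = x")
            case True hence "inv \<alpha> x = x" using ia[of x] by simp
            thus ?thesis using rhs ibx bx True by simp
          next
            case False
            have y1: "\<alpha> (inv \<alpha> x) \<noteq> inv \<alpha> x"
            proof
              assume "\<alpha> (inv \<alpha> x) = inv \<alpha> x" hence "x = inv \<alpha> x" using ai[of x] by simp
              hence "\<alpha> x = x" using ai[of x] by simp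
              thus False using False by simp
            qed
            have y2: "inv \<alpha> x \<noteq> p"
            proof
              assume "inv \<alpha> x = p" hence "x = \<alpha> p" using ai[of x] by simp
              thus False using xa by simp
            qed
            have "\<beta> (inv \<alpha> x) = inv \<alpha> x" using fixB[OF y1 y2] .
            thus ?thesis using rhs ibx ai[of x] by simp
          qed
        next
          case bx: False
          have y1: "\<beta> (inv \<beta> x) \<noteq> inv \<beta> x"
          proof
            assume "\<beta> (inv \<beta> x) = inv \<beta> x" hence "x = inv \<beta> x" using bi[of x] by simp
            hence "\<beta> x = x" using bi[of x] by simp
            thus False using bx by simp
          qed
          have y2: "inv \<beta> x \<noteq> p"
          proof
            assume "inv \<beta> x = p" hence "x = \<beta> p" using bi[of x] by simp
            thus False using xb by simp
          qed
          have z: "\<alpha> (inv \<beta> x) = inv \<beta> x" using fixA[OF y1 y2] .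
          hence z': "inv \<alpha> (inv \<beta> x) = inv \<beta> x" using ia[of "inv \<beta> x"] by simp
          have ax: "\<alpha> x = x" using fixA[OF bx xp] .
          show ?thesis using rhs z' bi[of x] ax by simp
        qed
      qed
    qed
  qed
qed

lemma growth:
  assumes fin: "finite X" and S: "\<forall>s\<in>S. s permutes X" and T: "T \<subseteq> perm_gen S" and TX: "\<forall>t\<in>T. t permutes X"
    and Y0X: "Y0 \<subseteq> X" and PY0: "P2 (perm_gen S) Y0"
    and ov: "\<forall>t\<in>T. \<exists>a b. a \<noteq> b \<and> a \<in> Y0 \<and> b \<in> Y0 \<and> t a \<in> Y0 \<and> t b \<in> Y0"
  shows "\<exists>Z. Y0 \<subseteq> Z \<and> Z \<subseteq> X \<and> P2 (perm_gen S) Z \<and> (\<forall>t\<in>T. t ` Z = Z)"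
proof -
  have main: "\<forall>Z. card (X - Z) = k \<longrightarrow> Y0 \<subseteq> Z \<longrightarrow> Z \<subseteq> X \<longrightarrow> P2 (perm_gen S) Z \<longrightarrow>
     (\<exists>Z'. Y0 \<subseteq> Z' \<and> Z' \<subseteq> X \<and> P2 (perm_gen S) Z' \<and> (\<forall>t\<in>T. t ` Z' = Z'))" for k
  proof (induction k rule: less_induct)
    case (less k)
    show ?case
    proof (intro allI impI)
      fix Z assume k: "card (X - Z) = k" and Y: "Y0 \<subseteq> Z" and ZX: "Z \<subseteq> X" and PZ: "P2 (perm_gen S) Z"
      show "\<exists>Z'. Y0 \<subseteq> Z' \<and> Z' \<subseteq> X \<and> P2 (perm_gen S) Z' \<and> (\<forall>t\<in>T. t ` Z' = Z')"
      proof (cases "\<forall>t\<in>T. t ` Z = Z")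
        case True thus ?thesis using Y ZX PZ by blast
      next
        case False
        then obtain t where tT: "t \<in> T" and ne: "t ` Z \<noteq> Z" by blast
        have tp: "t permutes X" using TX tT by blast
        have finZ: "finite Z" using ZX fin finite_subset by blast
        have tZX: "t ` Z \<subseteq> X" using ZX image_mono[of Z X t] permutes_image[OF tp] by simp
        have cardeq: "card (t ` Z) = card Z" by (rule card_image[OF inj_on_subset[OF permutes_inj[OF tp] subset_UNIV]])
        have nsub: "\<not> t ` Z \<subseteq> Z"
        proof
          assume "t ` Z \<subseteq> Z"
          hence "t ` Z = Z" using cardeq finZ by (simp add: card_subset_eq)
          thus False using ne by blast
        qed
        let ?Z' = "Z \<union> t ` Z"
        obtain a b where ab: "a \<noteq> b" "a \<in> Y0" "b \<in> Y0" "t a \<in> Y0" "t b \<in> Y0" using ov tT by blast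
        have inj: "inj t" using tp permutes_inj by blast
        have PtZ: "P2 (perm_gen S) (t ` Z)" using P2_image[OF S subsetD[OF T tT] PZ] .
        have m1: "t a \<in> Z" "t b \<in> Z" using ab Y by blast+
        have m2: "t a \<in> t ` Z" "t b \<in> t ` Z" using ab Y by blast+
        have m3: "t a \<noteq> t b" using ab(1) inj by (simp add: inj_eq)
        have PZ': "P2 (perm_gen S) ?Z'" by (rule P2_merge[OF PZ PtZ m1(1) m2(1) m1(2) m2(2) m3])
        have Z'X: "?Z' \<subseteq> X" using ZX tZX by blast
        have lt: "card (X - ?Z') < k"
        proof -
          have "X - ?Z' \<subset> X - Z" using nsub tZX by blast
          thus ?thesis using k fin psubset_card_mono[of "X - Z" "X - ?Z'"] by auto
        qed
        have YZ': "Y0 \<subseteq> ?Z'" using Y by blast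
        show ?thesis using less.IH[OF lt, rule_format, OF refl YZ' Z'X PZ'] .
      qed
    qed
  qed
  show ?thesis using main[of "card (X - Y0)"] Y0X PY0 by blast
qed

lemma P2_alt:
  assumes fin: "finite X" and S: "\<forall>s\<in>S. s permutes X" and P: "P2 (perm_gen S) X"
    and x01: "x0 \<in> X" "x1 \<in> X" "x0 \<noteq> x1"
    and p: "p permutes X"
  shows "(evenperm p \<longrightarrow> p \<in> perm_gen S) \<and> (\<not> evenperm p \<longrightarrow> transpose x0 x1 \<circ> p \<in> perm_gen S)"
  using p fin
proof (induction rule: permutes_induct)
  case id show ?case using perm_gen.gen_id[of S] by (simp add: id_def)
next
  case (swap a b p)
  have pp: "permutation p" using swap.hyps(4) fin permutation_permutes by blast
  have ev: "evenperm (transpose a b \<circ> p) = (\<not> evenperm p)"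
    using evenperm_comp[OF permutation_swap_id pp] swap.hyps(3) by (simp add: evenperm_swap)
  show ?case
  proof (cases "evenperm p")
    case True
    hence pin: "p \<in> perm_gen S" using swap.IH by blast
    have "transpose x0 x1 \<circ> transpose a b \<in> perm_gen S" using P x01 swap.hyps by (intro P2D[OF P]) auto
    hence 1: "transpose x0 x1 \<circ> (transpose a b \<circ> p) \<in> perm_gen S"
      using perm_gen.gen_comp[OF _ pin] by (simp add: o_assoc)
    have 2: "\<not> evenperm (transpose a b \<circ> p)" using ev True by simp
    show ?thesis using 1 2 by blast
  next
    case False
    hence pin: "transpose x0 x1 \<circ> p \<in> perm_gen S" using swap.IH by blast
    have "transpose a b \<circ> transpose x0 x1 \<in> perm_gen S" using P x01 swap.hyps by (intro P2D[OF P]) auto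
    hence "(transpose a b \<circ> transpose x0 x1) \<circ> (transpose x0 x1 \<circ> p) \<in> perm_gen S"
      using perm_gen.gen_comp[OF _ pin] by blast
    moreover have "(transpose a b \<circ> transpose x0 x1) \<circ> (transpose x0 x1 \<circ> p) = transpose a b \<circ> p"
      by (simp add: fun_eq_iff)
    ultimately have 1: "transpose a b \<circ> p \<in> perm_gen S" by simp
    have 2: "evenperm (transpose a b \<circ> p)" using ev False by simp
    show ?thesis using 1 2 by blast
  qed
qed

lemma gen_alt_sym:
  assumes fin: "finite X" and S: "\<forall>s\<in>S. s permutes X" and P: "P2 (perm_gen S) X"
    and x01: "x0 \<in> X" "x1 \<in> X" "x0 \<noteq> x1"
  shows "\<And>p. p permutes X \<Longrightarrow> evenperm p \<Longrightarrow> p \<in> perm_gen S"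
    and "\<And>h p. h \<in> perm_gen S \<Longrightarrow> \<not> evenperm h \<Longrightarrow> p permutes X \<Longrightarrow> p \<in> perm_gen S"
proof -
  show "\<And>p. p permutes X \<Longrightarrow> evenperm p \<Longrightarrow> p \<in> perm_gen S" using P2_alt[OF assms] by blast
next
  fix h p assume h: "h \<in> perm_gen S" "\<not> evenperm h" and p: "p permutes X"
  have hp: "h permutes X" using pg_permutes S h(1) by blast
  show "p \<in> perm_gen S"
  proof (cases "evenperm p")
    case True thus ?thesis using P2_alt[OF assms p] by blast
  next
    case False
    have ph: "p \<circ> inv h permutes X" using p hp by (simp add: permutes_compose permutes_inv)
    have pp: "permutation p" "permutation (inv h)"
      using p hp fin permutation_permutes permutes_inv by blast+
    have "evenperm (p \<circ> inv h)" using evenperm_comp[OF pp] evenperm_inv[of h] False h(2) hp fin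
      permutation_permutes by blast
    hence "p \<circ> inv h \<in> perm_gen S" using P2_alt[OF assms ph] by blast
    hence "(p \<circ> inv h) \<circ> h \<in> perm_gen S" using h(1) by (rule perm_gen.gen_comp)
    moreover have "(p \<circ> inv h) \<circ> h = p" using hp by (simp add: fun_eq_iff permutes_inverses(2))
    ultimately show ?thesis by simp
  qed
qed



locale cubeset =
  fixes A :: "'a set" and n q :: nat and e :: "nat \<Rightarrow> 'a"
  assumes bij_e: "bij_betw e {..<q} A" and n2: "2 \<le> n" and q2: "2 \<le> q"
begin

abbreviation X where "X \<equiv> cube A n"

definition num :: "'a \<Rightarrow> nat" where "num a = inv_into {..<q} e a"
definition liftp :: "(nat \<Rightarrow> nat) \<Rightarrow> 'a \<Rightarrow> 'a" where
  "liftp \<sigma> a = (if a \<in> A then e (\<sigma> (num a)) else a)"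
definition lin :: "nat \<Rightarrow> ((nat \<Rightarrow> 'a) \<Rightarrow> 'a \<Rightarrow> 'a) \<Rightarrow> (nat \<Rightarrow> 'a) \<Rightarrow> (nat \<Rightarrow> 'a)" where
  "lin j P x = (if x \<in> X then x(j := P x (x j)) else x)"

lemma finA: "finite A" using bij_e bij_betw_finite by blast
lemma cardA: "card A = q" using bij_betw_same_card[OF bij_e] by simp
lemma finX: "finite X" unfolding cube_def using finA by (simp add: finite_PiE)

lemma e_in: "d < q \<Longrightarrow> e d \<in> A" using bij_betwE[OF bij_e] by blast
lemma num_e[simp]: "d < q \<Longrightarrow> num (e d) = d"
  unfolding num_def using inv_into_f_f[OF bij_betw_imp_inj_on[OF bij_e]] by simp
lemma e_num[simp]: "a \<in> A \<Longrightarrow> e (num a) = a"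
  unfolding num_def using f_inv_into_f[of a e "{..<q}"] bij_betw_imp_surj_on[OF bij_e] by simp
lemma num_lt: "a \<in> A \<Longrightarrow> num a < q"
  unfolding num_def using inv_into_into[of a e "{..<q}"] bij_betw_imp_surj_on[OF bij_e] by simp
lemma e_inj: assumes "d < q" "d' < q" shows "e d = e d' \<longleftrightarrow> d = d'"
proof
  assume "e d = e d'" hence "num (e d) = num (e d')" by simp
  thus "d = d'" using assms by simp
qed simp
lemma num_inj: assumes "a \<in> A" "b \<in> A" shows "num a = num b \<longleftrightarrow> a = b"
proof
  assume "num a = num b" hence "e (num a) = e (num b)" by simp
  thus "a = b" using assms by simp
qed simp

lemma cube_mem: "x \<in> X \<longleftrightarrow> (\<forall>k<n. x k \<in> A) \<and> (\<forall>k. \<not> k < n \<longrightarrow> x k = undefined)"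
  unfolding cube_def PiE_def extensional_def by auto
lemma upd_in: "x \<in> X \<Longrightarrow> j < n \<Longrightarrow> a \<in> A \<Longrightarrow> x(j := a) \<in> X"
  unfolding cube_mem by auto
lemma cube_eqI: assumes "x \<in> X" "y \<in> X" "\<And>k. k < n \<Longrightarrow> x k = y k" shows "x = y"
proof (rule ext)
  fix k show "x k = y k" by (cases "k < n") (use assms in \<open>auto simp: cube_mem\<close>)
qed
lemma cube_in: "x \<in> X \<Longrightarrow> k < n \<Longrightarrow> x k \<in> A" unfolding cube_mem by auto

lemma liftp_in: "(\<And>d. d < q \<Longrightarrow> \<sigma> d < q) \<Longrightarrow> a \<in> A \<Longrightarrow> liftp \<sigma> a \<in> A"
  unfolding liftp_def by (simp add: e_in num_lt)
lemma liftp_e[simp]: "d < q \<Longrightarrow> liftp \<sigma> (e d) = e (\<sigma> d)"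
  unfolding liftp_def by (simp add: e_in)
lemma liftp_funpow: assumes "\<And>d. d < q \<Longrightarrow> \<sigma> d < q" "a \<in> A"
  shows "(liftp \<sigma> ^^ k) a = e ((\<sigma> ^^ k) (num a))"
proof (induction k)
  case 0 thus ?case using assms(2) by simp
next
  case (Suc k)
  have lt: "(\<sigma> ^^ k) (num a) < q"
    by (induction k) (use assms num_lt in auto)
  show ?case using Suc lt by simp
qed

lemma liftp_permutes: assumes "bij_betw \<sigma> {..<q} {..<q}" shows "liftp \<sigma> permutes A"
proof (rule bij_imp_permutes)
  have inA: "\<And>d. d < q \<Longrightarrow> \<sigma> d < q" using assms bij_betwE by fastforce
  have inj: "inj_on \<sigma> {..<q}" using assms bij_betw_def by blast
  show "bij_betw (liftp \<sigma>) A A"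
  proof (rule bij_betw_imageI)
    show "inj_on (liftp \<sigma>) A"
    proof
      fix a b assume ab: "a \<in> A" "b \<in> A" "liftp \<sigma> a = liftp \<sigma> b"
      hence "e (\<sigma> (num a)) = e (\<sigma> (num b))" unfolding liftp_def by simp
      hence "\<sigma> (num a) = \<sigma> (num b)" using e_inj[OF inA[OF num_lt[OF ab(1)]] inA[OF num_lt[OF ab(2)]]] by blast
      hence "num a = num b" using inj_onD[OF inj] num_lt ab by simp
      thus "a = b" using num_inj ab by blast
    qed
  next
    show "liftp \<sigma> ` A = A"
    proof
      show "liftp \<sigma> ` A \<subseteq> A" using liftp_in inA by blast
    next
      show "A \<subseteq> liftp \<sigma> ` A"
      proof
        fix b assume b: "b \<in> A"
        have "num b \<in> \<sigma> ` {..<q}" using assms num_lt[OF b] by (simp add: bij_betw_def)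
        then obtain d where d: "d < q" "\<sigma> d = num b" by auto
        have "liftp \<sigma> (e d) = b" using d b by simp
        thus "b \<in> liftp \<sigma> ` A" using e_in[OF d(1)] by force
      qed
    qed
  qed
next
  show "\<And>x. x \<notin> A \<Longrightarrow> liftp \<sigma> x = x" unfolding liftp_def by simp
qed

definition linv :: "nat \<Rightarrow> ((nat \<Rightarrow> 'a) \<Rightarrow> 'a \<Rightarrow> 'a) \<Rightarrow> bool" where
  "linv j P \<longleftrightarrow> (\<forall>x\<in>X. \<forall>a\<in>A. P (x(j := a)) = P x) \<and> (\<forall>x\<in>X. P x permutes A)"

lemma lin_in: "linv j P \<Longrightarrow> j < n \<Longrightarrow> x \<in> X \<Longrightarrow> lin j P x \<in> X"
  unfolding lin_def linv_def using upd_in cube_in permutes_in_image by fastforce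

lemma lin_iter:
  assumes L: "linv j P" and j: "j < n" and x: "x \<in> X"
  shows "(lin j P ^^ k) x = x(j := (P x ^^ k) (x j))"
proof (induction k)
  case 0 thus ?case by simp
next
  case (Suc k)
  have xj: "x j \<in> A" using cube_in x j by blast
  have pa: "(P x ^^ k) (x j) \<in> A"
  proof (induction k)
    case (Suc k) thus ?case using L x unfolding linv_def by (simp add: permutes_in_image)
  qed (use xj in simp)
  let ?y = "x(j := (P x ^^ k) (x j))"
  have y: "?y \<in> X" using upd_in x j pa by blast
  have Py: "P ?y = P x" using L x pa unfolding linv_def by blast
  have "(lin j P ^^ Suc k) x = lin j P ?y" by (simp only: funpow.simps(2) o_apply Suc.IH)
  also have "\<dots> = ?y(j := P ?y (?y j))" using y by (simp only: lin_def if_True)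
  also have "\<dots> = x(j := (P x ^^ Suc k) (x j))" using Py by simp
  finally show ?case .
qed

lemma lin_permutes:
  assumes L: "linv j P" and j: "j < n"
  shows "lin j P permutes X"
proof (rule bij_imp_permutes)
  let ?Q = "\<lambda>x. inv (P x)"
  have LQ: "linv j ?Q" using L unfolding linv_def by (auto intro: permutes_inv)
  have bk: "lin j ?Q (lin j P x) = x" if x: "x \<in> X" for x
  proof -
    have xj: "x j \<in> A" using cube_in x j by blast
    have pa: "P x (x j) \<in> A" using L x xj unfolding linv_def by (simp add: permutes_in_image)
    have y: "lin j P x = x(j := P x (x j))" using x by (simp add: lin_def)
    have yX: "x(j := P x (x j)) \<in> X" using upd_in x j pa by blast
    have Py: "P (x(j := P x (x j))) = P x" using L x pa unfolding linv_def by blast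
    have "inv (P x) (P x (x j)) = x j" using L x unfolding linv_def by (meson permutes_inverses(2))
    thus ?thesis using y yX Py by (simp add: lin_def)
  qed
  have fwd: "lin j P (lin j ?Q x) = x" if x: "x \<in> X" for x
  proof -
    have xj: "x j \<in> A" using cube_in x j by blast
    have pa: "inv (P x) (x j) \<in> A" using LQ x xj unfolding linv_def by (simp add: permutes_in_image)
    have y: "lin j ?Q x = x(j := inv (P x) (x j))" using x by (simp add: lin_def)
    have yX: "x(j := inv (P x) (x j)) \<in> X" using upd_in x j pa by blast
    have Py: "P (x(j := inv (P x) (x j))) = P x" using L x pa unfolding linv_def by blast
    have "P x (inv (P x) (x j)) = x j" using L x unfolding linv_def by (meson permutes_inverses(1))
    thus ?thesis using y yX Py by (simp add: lin_def)
  qed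
  show "bij_betw (lin j P) X X"
    by (rule bij_betw_byWitness[where f'="lin j ?Q"])
       (use bk fwd lin_in[OF L j] lin_in[OF LQ j] in auto)
  show "\<And>x. x \<notin> X \<Longrightarrow> lin j P x = x" by (simp add: lin_def)
qed

lemma lin_instr: assumes "linv j P" "j < n" shows "instruction A n (lin j P)"
  unfolding instruction_def using lin_permutes[OF assms] assms(2) by (auto simp: lin_def)

lemma lin_cong: "(\<And>x. x \<in> X \<Longrightarrow> P x (x j) = P' x (x j)) \<Longrightarrow> lin j P = lin j P'"
  by (auto simp: lin_def fun_eq_iff)

lemma lin_comp: assumes L: "linv j Q" and j: "j < n" and inv: "\<forall>x\<in>X. \<forall>a\<in>A. P (x(j := a)) = P x"
  shows "lin j P \<circ> lin j Q = lin j (\<lambda>x. P x \<circ> Q x)"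
proof (rule ext)
  fix x show "(lin j P \<circ> lin j Q) x = lin j (\<lambda>x. P x \<circ> Q x) x"
  proof (cases "x \<in> X")
    case True
    have xj: "x j \<in> A" using cube_in True j by blast
    have pa: "Q x (x j) \<in> A" using L True xj unfolding linv_def by (simp add: permutes_in_image)
    have yX: "x(j := Q x (x j)) \<in> X" using upd_in True j pa by blast
    have "P (x(j := Q x (x j))) = P x" using inv True pa by blast
    thus ?thesis using True yX by (simp add: lin_def)
  qed (simp add: lin_def)
qed

lemma transpose_lin:
  assumes u: "u \<in> X" and j: "j < n" and ab: "a \<in> A" "b \<in> A"
  shows "transpose (u(j := a)) (u(j := b)) = lin j (\<lambda>x. if (\<forall>k<n. k \<noteq> j \<longrightarrow> x k = u k) then transpose a b else id)"
proof (rule ext)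
  fix x
  have ua: "u(j:=a) \<in> X" "u(j:=b) \<in> X" using upd_in u j ab by auto
  show "transpose (u(j := a)) (u(j := b)) x = lin j (\<lambda>x. if (\<forall>k<n. k \<noteq> j \<longrightarrow> x k = u k) then transpose a b else id) x"
  proof (cases "x \<in> X")
    case False
    hence "x \<noteq> u(j:=a)" "x \<noteq> u(j:=b)" using ua by auto
    thus ?thesis using False by (simp add: lin_def)
  next
    case xX: True
    have eqa: "x = u(j := c) \<longleftrightarrow> (\<forall>k<n. k \<noteq> j \<longrightarrow> x k = u k) \<and> x j = c" if c: "c \<in> A" for c
    proof
      assume "x = u(j := c)" thus "(\<forall>k<n. k \<noteq> j \<longrightarrow> x k = u k) \<and> x j = c" by simp
    next
      assume h: "(\<forall>k<n. k \<noteq> j \<longrightarrow> x k = u k) \<and> x j = c"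
      show "x = u(j := c)" by (rule cube_eqI[OF xX upd_in[OF u j c]]) (use h in auto)
    qed
    show ?thesis
    proof (cases "\<forall>k<n. k \<noteq> j \<longrightarrow> x k = u k")
      case True
      have xe: "x = u(j := x j)" using eqa[of "x j"] True cube_in xX j by blast
      show ?thesis using True eqa[OF ab(1)] eqa[OF ab(2)] xX
        by (auto simp: lin_def transpose_def)
    next
      case False
      hence "x \<noteq> u(j:=a)" "x \<noteq> u(j:=b)" using eqa ab by blast+
      thus ?thesis using False xX by (auto simp: lin_def)
    qed
  qed
qed

end


context cubeset begin

lemma funpow_outside: "(\<And>x. x \<notin> X \<Longrightarrow> f x = x) \<Longrightarrow> x \<notin> X \<Longrightarrow> (f ^^ k) x = x"
  by (induction k) auto

lemma permutes_funpow: "f permutes S \<Longrightarrow> (f ^^ k) permutes S"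
  by (induction k) (auto intro: permutes_compose)

lemma linv_const: "\<sigma> permutes A \<Longrightarrow> linv j (\<lambda>_. \<sigma>)" unfolding linv_def by simp

definition rhoN :: "nat \<Rightarrow> nat" where "rhoN d = (d + 1) mod q"
definition rho :: "'a \<Rightarrow> 'a" where "rho = liftp rhoN"

lemma rhoN_lt: "rhoN d < q" unfolding rhoN_def using q2 by simp
lemma rhoN_funpow: "d < q \<Longrightarrow> (rhoN ^^ k) d = (d + k) mod q"
proof (induction k)
  case (Suc k) thus ?case by (simp add: rhoN_def mod_Suc_eq)
qed simp

lemma rhoN_bij: "bij_betw rhoN {..<q} {..<q}"
proof (rule bij_betw_imageI)
  show "inj_on rhoN {..<q}"
  proof
    fix a b assume ab: "a \<in> {..<q}" "b \<in> {..<q}" "rhoN a = rhoN b"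
    hence "(rhoN ^^ (q - 1)) (rhoN a) = (rhoN ^^ (q-1)) (rhoN b)" by simp
    hence "(rhoN ^^ (Suc (q - 1))) a = (rhoN ^^ (Suc (q-1))) b" by (simp only: funpow_Suc_right o_apply)
    thus "a = b" using ab q2 rhoN_funpow by simp
  qed
next
  show "rhoN ` {..<q} = {..<q}"
  proof
    show "rhoN ` {..<q} \<subseteq> {..<q}" using rhoN_lt by auto
  next
    show "{..<q} \<subseteq> rhoN ` {..<q}"
    proof
      fix b assume b: "b \<in> {..<q}"
      have "rhoN ((b + (q - 1)) mod q) = b" using b q2 by (simp add: rhoN_def mod_Suc_eq)
      moreover have "(b + (q - 1)) mod q < q" using q2 by simp
      ultimately show "b \<in> rhoN ` {..<q}" by force
    qed
  qed
qed

lemma rho_permutes: "rho permutes A" unfolding rho_def by (rule liftp_permutes[OF rhoN_bij])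
lemma rho_funpow: "a \<in> A \<Longrightarrow> (rho ^^ k) a = e ((num a + k) mod q)"
  unfolding rho_def using liftp_funpow[OF rhoN_lt] rhoN_funpow num_lt by simp
lemma rho_e: "d < q \<Longrightarrow> rho (e d) = e ((d + 1) mod q)"
  unfolding rho_def by (simp add: rhoN_def)

definition rj :: "nat \<Rightarrow> (nat \<Rightarrow> 'a) \<Rightarrow> (nat \<Rightarrow> 'a)" where "rj j = lin j (\<lambda>_. rho)"

lemma rj_permutes: "j < n \<Longrightarrow> rj j permutes X"
  unfolding rj_def by (rule lin_permutes[OF linv_const[OF rho_permutes]])

lemma evenperm_square: "permutation f \<Longrightarrow> evenperm (f \<circ> f)" by (simp add: evenperm_comp)

lemma rj_even: assumes j: "j < n" shows "evenperm (rj j)"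
proof (cases "even q")
  case False
  define m where "m = (q + 1) div 2"
  have mm: "m + m = q + 1" using False unfolding m_def by presburger
  have L: "linv j (\<lambda>_. rho)" by (rule linv_const[OF rho_permutes])
  have eq: "(rj j ^^ m) \<circ> (rj j ^^ m) = rj j"
  proof (rule ext)
    fix x
    have "((rj j ^^ m) \<circ> (rj j ^^ m)) x = (rj j ^^ (m + m)) x" by (simp add: funpow_add)
    also have "\<dots> = rj j x"
    proof (cases "x \<in> X")
      case True
      have xj: "x j \<in> A" using cube_in True j by blast
      have "(rj j ^^ (m + m)) x = x(j := (rho ^^ (q + 1)) (x j))"
        unfolding rj_def mm by (rule lin_iter[OF L j True])
      also have "\<dots> = x(j := rho (x j))"
      proof -
        have "(rho ^^ (q + 1)) (x j) = e ((num (x j) + (q + 1)) mod q)" by (rule rho_funpow[OF xj])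
        also have "\<dots> = e ((num (x j) + 1) mod q)"
          by (metis add.commute add.left_commute mod_add_self2)
        also have "\<dots> = rho (x j)" using rho_funpow[OF xj, of 1] by simp
        finally show ?thesis by simp
      qed
      also have "\<dots> = rj j x" using True by (simp add: rj_def lin_def)
      finally show ?thesis .
    next
      case False
      have "\<And>y. y \<notin> X \<Longrightarrow> rj j y = y" by (simp add: rj_def lin_def)
      thus ?thesis using funpow_outside False by metis
    qed
    finally show "((rj j ^^ m) \<circ> (rj j ^^ m)) x = rj j x" .
  qed
  have "permutation (rj j ^^ m)" using permutes_funpow[OF rj_permutes[OF j]] finX permutation_permutes by blast
  thus ?thesis using evenperm_square eq by metis
next
  case True
  define k :: nat where "k = (if j = 0 then 1 else 0)"
  have k: "k < n" "k \<noteq> j" using n2 unfolding k_def by auto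
  define sigN :: "nat \<Rightarrow> nat" where "sigN d = (if even d then d + 1 else d - 1)" for d
  have sig_lt: "sigN d < q" if "d < q" for d
    using that \<open>even q\<close> unfolding sigN_def by presburger
  have sig_inv: "sigN (sigN d) = d" for d
    unfolding sigN_def by presburger
  have sig_par: "even (sigN d) \<longleftrightarrow> odd d" for d
    unfolding sigN_def by presburger
  have sig_bij: "bij_betw sigN {..<q} {..<q}"
    by (rule bij_betw_byWitness[where f'=sigN]) (use sig_lt sig_inv in auto)
  define sig where "sig = liftp sigN"
  have sigp: "sig permutes A" unfolding sig_def by (rule liftp_permutes[OF sig_bij])
  have sig_num: "num (sig a) = sigN (num a)" if a: "a \<in> A" for a
  proof -
    have "sigN (num a) < q" using sig_lt num_lt[OF a] by blast
    thus ?thesis using a by (simp add: sig_def liftp_def)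
  qed
  have sig_in: "a \<in> A \<Longrightarrow> sig a \<in> A" for a using permutes_in_image[OF sigp] by simp
  have sig_sig: "sig (sig a) = a" if a: "a \<in> A" for a
  proof -
    have "sigN (num a) < q" using sig_lt num_lt[OF a] by blast
    hence "sig (sig a) = e (sigN (sigN (num a)))" using a e_in by (simp add: sig_def liftp_def)
    thus ?thesis using sig_inv a by simp
  qed
  define h where "h = lin k (\<lambda>_. sig)"
  define s where "s = lin j (\<lambda>x. if even (num (x k)) then rho else id)"
  define t where "t = lin j (\<lambda>x. if odd (num (x k)) then rho else id)"
  have Lh: "linv k (\<lambda>_. sig)" by (rule linv_const[OF sigp])
  have Ls: "linv j (\<lambda>x. if even (num (x k)) then rho else id)"
    unfolding linv_def using k rho_permutes by auto
  have Lt: "linv j (\<lambda>x. if odd (num (x k)) then rho else id)"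
    unfolding linv_def using k rho_permutes by auto
  have hp: "h permutes X" unfolding h_def by (rule lin_permutes[OF Lh k(1)])
  have sp: "s permutes X" unfolding s_def by (rule lin_permutes[OF Ls j])
  have tp: "t permutes X" unfolding t_def by (rule lin_permutes[OF Lt j])
  have hx: "x \<in> X \<Longrightarrow> h x = x(k := sig (x k))" for x by (simp add: h_def lin_def)
  have sx: "x \<in> X \<Longrightarrow> s x = x(j := (if even (num (x k)) then rho else id) (x j))" for x by (simp add: s_def lin_def)
  have tx: "x \<in> X \<Longrightarrow> t x = x(j := (if odd (num (x k)) then rho else id) (x j))" for x by (simp add: t_def lin_def)
  have rx: "x \<in> X \<Longrightarrow> rj j x = x(j := rho (x j))" for x by (simp add: rj_def lin_def)
  have out: "x \<notin> X \<Longrightarrow> h x = x \<and> s x = x \<and> t x = x \<and> rj j x = x" for x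
    by (simp add: h_def s_def t_def rj_def lin_def)
  have hst: "h \<circ> s \<circ> h = t"
  proof (rule ext)
    fix x show "(h \<circ> s \<circ> h) x = t x"
    proof (cases "x \<in> X")
      case True
      have xk: "x k \<in> A" using cube_in True k by blast
      have xj: "x j \<in> A" using cube_in True j by blast
      have hX: "h x \<in> X" using True permutes_in_image[OF hp] by simp
      have sX: "s (h x) \<in> X" using hX permutes_in_image[OF sp] by simp
      have 1: "h x = x(k := sig (x k))" using hx True .
      have 2: "s (h x) = x(k := sig (x k), j := (if odd (num (x k)) then rho else id) (x j))"
        using sx[OF hX] 1 k sig_num[OF xk] sig_par by simp
      have 3: "h (s (h x)) = x(j := (if odd (num (x k)) then rho else id) (x j))"
        using hx[OF sX] 2 k sig_sig[OF xk] by (simp add: fun_upd_twist)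
      thus ?thesis using tx[OF True] by simp
    qed (use out in simp)
  qed
  have st: "s \<circ> t = rj j"
  proof (rule ext)
    fix x show "(s \<circ> t) x = rj j x"
    proof (cases "x \<in> X")
      case True
      have tX: "t x \<in> X" using True permutes_in_image[OF tp] by simp
      show ?thesis using sx[OF tX] tx[OF True] rx[OF True] k by auto
    qed (use out in simp)
  qed
  have ph: "permutation h" "permutation s" using hp sp finX permutation_permutes by blast+
  have "evenperm t = evenperm s"
    using hst evenperm_comp ph permutation_compose by metis
  moreover have "evenperm (rj j) = (evenperm s = evenperm t)"
    using st evenperm_comp ph tp finX permutation_permutes by metis
  ultimately show ?thesis by simp
qed

end


locale cube3 = cubeset +
  fixes alt :: bool
  assumes q3: "3 \<le> q"
begin

definition lO where "lO = e 0"
definition lI where "lI = e 1"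
definition lL where "lL = e (q - 1)"
definition lT where "lT = e (q - 2)"
definition Z0 :: "nat \<Rightarrow> 'a" where "Z0 = (\<lambda>k. if k < n then lO else undefined)"

lemma OIL_in: "lO \<in> A" "lI \<in> A" "lL \<in> A" "lT \<in> A"
  unfolding lO_def lI_def lL_def lT_def using e_in q3 by auto
lemma OIL_ne: "lO \<noteq> lI" "lO \<noteq> lL" "lI \<noteq> lL" "lO \<noteq> lT" "lT \<noteq> lL"
  unfolding lO_def lI_def lL_def lT_def using e_inj q3 by auto
lemma num_OIL[simp]: "num lO = 0" "num lI = 1" "num lL = q - 1" "num lT = q - 2"
  unfolding lO_def lI_def lL_def lT_def using q3 by auto

lemma Z0_in: "Z0 \<in> X" unfolding cube_mem Z0_def using OIL_in by auto

definition kap :: "'a \<Rightarrow> 'a" where "kap = rho \<circ> transpose lT lL"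
definition k0 :: "'a \<Rightarrow> 'a" where "k0 = rho \<circ> transpose lL lO"
definition k1 :: "'a \<Rightarrow> 'a" where "k1 = rho \<circ> transpose lO lI"

lemma kap_permutes: "kap permutes A" unfolding kap_def
  using permutes_compose[OF permutes_swap_id[OF OIL_in(4) OIL_in(3)] rho_permutes] .
lemma k0_permutes: "k0 permutes A" unfolding k0_def
  using permutes_compose[OF permutes_swap_id[OF OIL_in(3) OIL_in(1)] rho_permutes] .
lemma k1_permutes: "k1 permutes A" unfolding k1_def
  using permutes_compose[OF permutes_swap_id[OF OIL_in(1) OIL_in(2)] rho_permutes] .

lemma rho_L: "rho lL = lO" unfolding lL_def lO_def using rho_e[of "q - 1"] q3 by simp
lemma rho_O: "rho lO = lI" unfolding lI_def lO_def using rho_e[of 0] q3 by simp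
lemma q_arith: "Suc (q - 2) = q - 1" "Suc 0 < q - 1" using q3 by arith+

lemma kap_e: assumes d: "d < q - 1" shows "kap (e d) = e ((d + 1) mod (q - 1))"
proof (cases "d = q - 2")
  case True
  have "kap (e d) = rho lL" unfolding kap_def using True by (simp add: lT_def)
  also have "\<dots> = lO" by (rule rho_L)
  also have "\<dots> = e ((d + 1) mod (q - 1))" using True q_arith by (simp add: lO_def)
  finally show ?thesis .
next
  case False
  have dq: "d < q" "q - 2 < q" "q - 1 < q" using d q3 by arith+
  have ne: "e d \<noteq> lT" "e d \<noteq> lL" unfolding lT_def lL_def
    using e_inj[OF dq(1) dq(2)] e_inj[OF dq(1) dq(3)] d False by simp_all
  have "kap (e d) = rho (e d)" unfolding kap_def using ne by simp
  also have "\<dots> = e ((d + 1) mod q)" by (rule rho_e[OF dq(1)])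
  also have "(d + 1) mod q = d + 1" using d by simp
  also have "d + 1 = (d + 1) mod (q - 1)" using d False by simp
  finally show ?thesis .
qed
lemma kap_L: "kap lL = lL"
proof -
  have "kap lL = rho lT" unfolding kap_def by simp
  also have "\<dots> = e ((q - 2 + 1) mod q)" unfolding lT_def by (rule rho_e) (use q3 in arith)
  also have "(q - 2 + 1) mod q = q - 1" using q3 by simp
  finally show ?thesis by (simp add: lL_def)
qed

lemma kap_funpow: assumes d: "d < q - 1" shows "(kap ^^ k) (e d) = e ((d + k) mod (q - 1))"
proof (induction k)
  case (Suc k)
  have lt: "(d + k) mod (q - 1) < q - 1" using q3 by simp
  have "(kap ^^ Suc k) (e d) = kap ((kap ^^ k) (e d))" by simp
  also have "\<dots> = kap (e ((d + k) mod (q - 1)))" by (simp only: Suc.IH)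
  also have "\<dots> = e (((d + k) mod (q - 1) + 1) mod (q - 1))" by (rule kap_e[OF lt])
  also have "\<dots> = e ((d + Suc k) mod (q - 1))" by (simp add: mod_Suc_eq)
  finally show ?case .
qed (use d in simp)

lemma funpow_fix: "f a = a \<Longrightarrow> (f ^^ k) a = a" by (induction k) auto

lemma kap_q: assumes a: "a \<in> A" shows "(kap ^^ q) a = kap a"
proof (cases "a = lL")
  case True thus ?thesis using funpow_fix[of kap, OF kap_L] kap_L by simp
next
  case False
  have ne: "num a \<noteq> q - 1"
  proof
    assume "num a = q - 1" hence "e (num a) = lL" by (simp add: lL_def)
    thus False using a False by simp
  qed
  have d: "num a < q - 1" using num_lt[OF a] ne by arith
  have "(kap ^^ q) a = e ((num a + q) mod (q - 1))" using kap_funpow[OF d] a by simp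
  also have "\<dots> = e ((num a + 1) mod (q - 1))"
  proof -
    have "num a + q = (num a + 1) + (q - 1)" using q3 by simp
    thus ?thesis by (simp only: mod_add_self2)
  qed
  also have "\<dots> = kap a" using kap_e[OF d] a by simp
  finally show ?thesis .
qed

lemma kap_O: "kap lO = lI"
  using kap_e[of 0] q_arith by (simp add: lO_def lI_def)

lemma rho_q: "a \<in> A \<Longrightarrow> (rho ^^ q) a = a"
  using rho_funpow[of a q] num_lt by simp

lemma k0_O: "k0 lO = lO" unfolding k0_def using rho_L by simp
lemma k1_I: "k1 lI = lI" unfolding k1_def using rho_O by simp
lemma k1_L: "k1 lL = lO" unfolding k1_def using rho_L OIL_ne by simp


lemma k0_funpow: "k \<le> q - 2 \<Longrightarrow> (k0 ^^ k) lI = e (k + 1)"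
proof (induction k)
  case 0 thus ?case by (simp add: lI_def)
next
  case (Suc k)
  have k: "k + 1 < q - 1" "k + 1 < q" using Suc.prems q3 by arith+
  have ne: "e (k + 1) \<noteq> lL" "e (k + 1) \<noteq> lO" unfolding lL_def lO_def
    using e_inj[OF k(2), of "q - 1"] e_inj[OF k(2), of 0] k q3 by auto
  have "(k0 ^^ Suc k) lI = k0 (e (k + 1))" using Suc by simp
  also have "\<dots> = rho (e (k + 1))" unfolding k0_def using ne by simp
  also have "\<dots> = e ((k + 1 + 1) mod q)" by (rule rho_e[OF k(2)])
  also have "(k + 1 + 1) mod q = Suc k + 1" using k by simp
  finally show ?case .
qed

definition lineZ :: "nat \<Rightarrow> (nat \<Rightarrow> 'a) \<Rightarrow> bool" where
  "lineZ j x \<longleftrightarrow> (\<forall>k<n. k \<noteq> j \<longrightarrow> x k = lO)"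
definition spl :: "nat \<Rightarrow> (nat \<Rightarrow> 'a) \<Rightarrow> bool" where
  "spl j x \<longleftrightarrow> (if j = 0 then alt \<and> (\<forall>k<n. k \<noteq> 0 \<longrightarrow> x k = lI)
                 else x 0 = lL \<and> (\<forall>k<n. k \<noteq> 0 \<and> k \<noteq> j \<longrightarrow> x k = lI))"
definition kk :: "nat \<Rightarrow> 'a \<Rightarrow> 'a" where "kk j = (if j = 0 then k0 else k1)"
definition fx :: "nat \<Rightarrow> 'a" where "fx j = (if j = 0 then lO else lI)"
definition Pg :: "nat \<Rightarrow> (nat \<Rightarrow> 'a) \<Rightarrow> 'a \<Rightarrow> 'a" where
  "Pg j x = (if lineZ j x then kap else if spl j x then kk j else rho)"
definition gen :: "nat \<Rightarrow> (nat \<Rightarrow> 'a) \<Rightarrow> (nat \<Rightarrow> 'a)" where "gen j = lin j (Pg j)"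
definition alpha :: "nat \<Rightarrow> (nat \<Rightarrow> 'a) \<Rightarrow> (nat \<Rightarrow> 'a)" where "alpha j = gen j ^^ q"

lemma kk_permutes: "kk j permutes A" unfolding kk_def using k0_permutes k1_permutes by simp
lemma kk_fx: "kk j (fx j) = fx j" unfolding kk_def fx_def using k0_O k1_I by simp

lemma lineZ_upd: "lineZ j (x(j := a)) = lineZ j x" unfolding lineZ_def by auto
lemma spl_upd: "spl j (x(j := a)) = spl j x" unfolding spl_def by auto

lemma not_both: "j < n \<Longrightarrow> lineZ j x \<Longrightarrow> spl j x \<Longrightarrow> False"
proof -
  assume j: "j < n" and lz: "lineZ j x" and sp: "spl j x"
  show False
  proof (cases "j = 0")
    case True
    have n1: "1 < n" using n2 by simp
    have "x 1 = lO" using lz True n1 unfolding lineZ_def by simp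
    moreover have "x 1 = lI" using sp True n1 unfolding spl_def by simp
    ultimately show False using OIL_ne by simp
  next
    case False
    have n0: "0 < n" using n2 by simp
    have "x 0 = lO" using lz False n0 unfolding lineZ_def by simp
    moreover have "x 0 = lL" using sp False unfolding spl_def by simp
    ultimately show False using OIL_ne by simp
  qed
qed

lemma linv_Pg: "linv j (Pg j)"
  unfolding linv_def Pg_def using lineZ_upd spl_upd kap_permutes kk_permutes rho_permutes by simp

lemma gen_permutes: "j < n \<Longrightarrow> gen j permutes X"
  unfolding gen_def by (rule lin_permutes[OF linv_Pg])
lemma gen_instr: "j < n \<Longrightarrow> instruction A n (gen j)"
  unfolding gen_def by (rule lin_instr[OF linv_Pg])

lemma gen_pt: "x \<in> X \<Longrightarrow> gen j x = x(j := Pg j x (x j))" by (simp add: gen_def lin_def)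
lemma gen_out: "x \<notin> X \<Longrightarrow> gen j x = x" by (simp add: gen_def lin_def)
lemma gen_iter: "j < n \<Longrightarrow> x \<in> X \<Longrightarrow> (gen j ^^ k) x = x(j := (Pg j x ^^ k) (x j))"
  unfolding gen_def by (rule lin_iter[OF linv_Pg])

lemma alpha_pt: "j < n \<Longrightarrow> x \<in> X \<Longrightarrow> alpha j x = x(j := (Pg j x ^^ q) (x j))"
  unfolding alpha_def by (rule gen_iter)
lemma alpha_out: "x \<notin> X \<Longrightarrow> alpha j x = x"
  unfolding alpha_def by (rule funpow_outside[OF gen_out])

lemma alpha_supp:
  assumes j: "j < n" and m: "alpha j x \<noteq> x"
  shows "x \<in> X \<and> ((lineZ j x \<and> x j \<noteq> lL) \<or> (spl j x \<and> x j \<noteq> fx j))"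
proof -
  have xX: "x \<in> X" using m alpha_out by blast
  have xj: "x j \<in> A" using cube_in xX j by blast
  have ne: "(Pg j x ^^ q) (x j) \<noteq> x j" using m alpha_pt[OF j xX] by auto
  show ?thesis
  proof (cases "lineZ j x")
    case True
    hence "(kap ^^ q) (x j) \<noteq> x j" using ne by (simp add: Pg_def)
    hence "x j \<noteq> lL" using funpow_fix[of kap, OF kap_L] by auto
    thus ?thesis using True xX by simp
  next
    case F: False
    show ?thesis
    proof (cases "spl j x")
      case True
      hence "(kk j ^^ q) (x j) \<noteq> x j" using ne F by (simp add: Pg_def)
      hence "x j \<noteq> fx j" using funpow_fix[of "kk j", OF kk_fx] by auto
      thus ?thesis using True xX by simp
    next
      case False
      hence "(rho ^^ q) (x j) \<noteq> x j" using ne F by (simp add: Pg_def)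
      thus ?thesis using rho_q[OF xj] by simp
    qed
  qed
qed

lemma inter_c1:
  assumes ij: "i < n" "j < n" "i \<noteq> j" and a: "lineZ i x" "x i \<noteq> lL" "spl j x" "x j \<noteq> fx j"
  shows False
proof (cases "j = 0")
  case True
  have "x 0 = lO" using a(1) ij True unfolding lineZ_def by simp
  thus False using a(4) True by (simp add: fx_def)
next
  case jn: False
  have x0: "x 0 = lL" using a(3) jn unfolding spl_def by simp
  show False
  proof (cases "i = 0")
    case True thus False using a(2) x0 by simp
  next
    case False
    have "x 0 = lO" using a(1) False n2 unfolding lineZ_def by simp
    thus False using x0 OIL_ne by simp
  qed
qed

lemma inter_c2:
  assumes ij: "i < n" "j < n" "i \<noteq> j" and a: "spl i x" "x i \<noteq> fx i" "spl j x" "x j \<noteq> fx j"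
  shows False
proof (cases "i = 0")
  case True
  have "x j = lI" using a(1) True ij unfolding spl_def by simp
  thus False using a(4) True ij by (simp add: fx_def)
next
  case iF: False
  show False
  proof (cases "j = 0")
    case True
    have "x i = lI" using a(3) True ij unfolding spl_def by simp
    thus False using a(2) iF by (simp add: fx_def)
  next
    case False
    have "x j = lI" using a(1) iF False ij unfolding spl_def by simp
    thus False using a(4) False by (simp add: fx_def)
  qed
qed

lemma alpha_inter:
  assumes ij: "i < n" "j < n" "i \<noteq> j" and mi: "alpha i x \<noteq> x" and mj: "alpha j x \<noteq> x"
  shows "x = Z0"
proof -
  note si = alpha_supp[OF ij(1) mi] and sj = alpha_supp[OF ij(2) mj]
  have xX: "x \<in> X" using si by blast
  have ji: "j \<noteq> i" using ij by simp
  have "lineZ i x \<and> lineZ j x"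
    using si sj inter_c1[OF ij] inter_c1[OF ij(2,1) ji] inter_c2[OF ij] by blast
  hence li: "lineZ i x" and lj: "lineZ j x" by auto
  show ?thesis
  proof (rule cube_eqI[OF xX Z0_in])
    fix k assume k: "k < n"
    show "x k = Z0 k"
    proof (cases "k = i")
      case True thus ?thesis using lj k ij unfolding lineZ_def Z0_def by simp
    next
      case False thus ?thesis using li k unfolding lineZ_def Z0_def by simp
    qed
  qed
qed

definition E :: "nat \<Rightarrow> nat \<Rightarrow> 'a" where "E j = Z0(j := lI)"

lemma lineZ_Z0: "lineZ j Z0" unfolding lineZ_def Z0_def by simp
lemma lineZ_upd_Z0: "lineZ j (Z0(j := a))" using lineZ_Z0 lineZ_upd by simp

lemma alpha_lineZ: assumes j: "j < n" and x: "x \<in> X" and lz: "lineZ j x"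
  shows "alpha j x = gen j x"
proof -
  have xj: "x j \<in> A" using cube_in x j by blast
  show ?thesis using alpha_pt[OF j x] gen_pt[OF x] lz kap_q[OF xj] by (simp add: Pg_def)
qed

lemma gen_Z0: "j < n \<Longrightarrow> gen j Z0 = E j"
  using gen_pt[OF Z0_in] lineZ_Z0 kap_O by (simp add: Pg_def E_def Z0_def)
lemma alpha_Z0: "j < n \<Longrightarrow> alpha j Z0 = E j"
  using alpha_lineZ[OF _ Z0_in lineZ_Z0] gen_Z0 by simp
lemma E_ne: "j < n \<Longrightarrow> E j \<noteq> Z0"
proof
  assume j: "j < n" and "E j = Z0"
  hence "E j j = Z0 j" by simp
  thus False using j OIL_ne unfolding E_def Z0_def by simp
qed
lemma E_ne2: "i < n \<Longrightarrow> j < n \<Longrightarrow> i \<noteq> j \<Longrightarrow> E i \<noteq> E j"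
proof
  assume ij: "i < n" "j < n" "i \<noteq> j" and "E i = E j"
  hence "E i i = E j i" by simp
  thus False using ij OIL_ne unfolding E_def Z0_def by simp
qed
lemma E_in: "j < n \<Longrightarrow> E j \<in> X" unfolding E_def using upd_in[OF Z0_in] OIL_in by blast

end


context cube3 begin

abbreviation H where "H \<equiv> perm_gen (gen ` {..<n})"

lemma S_perm: "\<forall>s\<in>gen ` {..<n}. s permutes X" using gen_permutes by blast
lemma gen_H: "j < n \<Longrightarrow> gen j \<in> H" by (rule perm_gen.gen_base) simp
lemma alpha_H: "j < n \<Longrightarrow> alpha j \<in> H" unfolding alpha_def by (rule pg_funpow[OF gen_H])
lemma alpha_permutes: "j < n \<Longrightarrow> alpha j permutes X"
  unfolding alpha_def by (rule permutes_funpow[OF gen_permutes])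
lemma alpha_inj: "j < n \<Longrightarrow> alpha j x = alpha j y \<longleftrightarrow> x = y"
  using permutes_inj[OF alpha_permutes] by (simp add: inj_eq)

lemma alpha_moves_E: "j < n \<Longrightarrow> alpha j (E j) \<noteq> E j"
proof
  assume j: "j < n" and h: "alpha j (E j) = E j"
  hence "alpha j (E j) = alpha j Z0" using alpha_Z0 by simp
  hence "E j = Z0" using alpha_inj[OF j] by simp
  thus False using E_ne[OF j] by simp
qed

lemma alpha_fix_E: "i < n \<Longrightarrow> j < n \<Longrightarrow> i \<noteq> j \<Longrightarrow> alpha j (E i) = E i"
proof (rule ccontr)
  assume ij: "i < n" "j < n" "i \<noteq> j" and h: "alpha j (E i) \<noteq> E i"
  have "E i = Z0" using alpha_inter[OF ij(1) ij(2) ij(3) alpha_moves_E[OF ij(1)] h] .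
  thus False using E_ne[OF ij(1)] by simp
qed

lemma three: "P2 H {Z0, E 0, E 1}"
proof -
  have n01: "0 < n" "1 < n" using n2 by auto
  have ba: "bij (alpha 0)" "bij (alpha 1)" using alpha_permutes n01 permutes_bij by blast+
  have comm: "alpha 0 \<circ> alpha 1 \<circ> inv (alpha 0) \<circ> inv (alpha 1) = transpose Z0 (alpha 1 Z0) \<circ> transpose Z0 (alpha 0 Z0)"
  proof (rule commutator_3cycle[OF ba])
    show "alpha 0 Z0 \<noteq> Z0" using alpha_Z0 E_ne n01 by simp
    show "alpha 1 Z0 \<noteq> Z0" using alpha_Z0 E_ne n01 by simp
    show "\<And>x. alpha 0 x \<noteq> x \<Longrightarrow> alpha 1 x \<noteq> x \<Longrightarrow> x = Z0" using alpha_inter[OF n01] by simp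
  qed
  have "alpha 0 \<circ> alpha 1 \<circ> inv (alpha 0) \<circ> inv (alpha 1) \<in> H"
    using alpha_H[OF n01(1)] alpha_H[OF n01(2)] by (meson perm_gen.gen_comp perm_gen.gen_inv)
  hence inH: "transpose Z0 (E 1) \<circ> transpose Z0 (E 0) \<in> H" using comm alpha_Z0 n01 by simp
  have d: "Z0 \<noteq> E 0" "Z0 \<noteq> E 1" "E 0 \<noteq> E 1" using E_ne[OF n01(1)] E_ne[OF n01(2)] E_ne2[OF n01] by auto
  show ?thesis by (rule P2_three[OF d inH])
qed

lemma stage1: "\<exists>Z. {Z0, E 0, E 1} \<subseteq> Z \<and> Z \<subseteq> X \<and> P2 H Z \<and> (\<forall>t\<in>alpha ` {..<n}. t ` Z = Z)"
proof (rule growth[OF finX S_perm _ _ _ three])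
  show "alpha ` {..<n} \<subseteq> H" using alpha_H by blast
  show "\<forall>t\<in>alpha ` {..<n}. t permutes X" using alpha_permutes by blast
  show "{Z0, E 0, E 1} \<subseteq> X" using Z0_in E_in n2 by auto
  show "\<forall>t\<in>alpha ` {..<n}. \<exists>a b. a \<noteq> b \<and> a \<in> {Z0, E 0, E 1} \<and> b \<in> {Z0, E 0, E 1} \<and>
           t a \<in> {Z0, E 0, E 1} \<and> t b \<in> {Z0, E 0, E 1}"
  proof
    fix t assume "t \<in> alpha ` {..<n}"
    then obtain j where j: "j < n" and t: "t = alpha j" by blast
    have n01: "0 < n" "1 < n" using n2 by auto
    show "\<exists>a b. a \<noteq> b \<and> a \<in> {Z0, E 0, E 1} \<and> b \<in> {Z0, E 0, E 1} \<and> t a \<in> {Z0, E 0, E 1} \<and> t b \<in> {Z0, E 0, E 1}"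
    proof (cases "j = 0")
      case True
      have "Z0 \<noteq> E 1" "t Z0 = E 0" "t (E 1) = E 1"
        using E_ne[OF n01(2)] alpha_Z0[OF n01(1)] alpha_fix_E[OF n01(2) n01(1)] t True by auto
      thus ?thesis by blast
    next
      case j0: False
      show ?thesis
      proof (cases "j = 1")
        case True
        have "Z0 \<noteq> E 0" "t Z0 = E 1" "t (E 0) = E 0"
          using E_ne[OF n01(1)] alpha_Z0[OF n01(2)] alpha_fix_E[OF n01(1) n01(2)] t True by auto
        thus ?thesis by blast
      next
        case False
        have "E 0 \<noteq> E 1" "t (E 0) = E 0" "t (E 1) = E 1"
          using E_ne2[OF n01] alpha_fix_E[OF n01(1) j] alpha_fix_E[OF n01(2) j] j0 False t by auto
        thus ?thesis by blast
      qed
    qed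
  qed
qed

lemma stage2: "\<exists>Z. Z0 \<in> Z \<and> Z \<subseteq> X \<and> P2 H Z \<and> (\<forall>t\<in>gen ` {..<n}. t ` Z = Z)"
proof -
  obtain Z1 where Z1: "{Z0, E 0, E 1} \<subseteq> Z1" "Z1 \<subseteq> X" "P2 H Z1" "\<forall>t\<in>alpha ` {..<n}. t ` Z1 = Z1"
    using stage1 by blast
  have inv1: "alpha j ` Z1 = Z1" if j: "j < n" for j using Z1(4) j by blast
  have EZ: "E j \<in> Z1" if j: "j < n" for j
  proof -
    have "alpha j Z0 \<in> alpha j ` Z1" using Z1(1) by blast
    thus ?thesis using inv1[OF j] alpha_Z0[OF j] by simp
  qed
  have "\<exists>Z. Z1 \<subseteq> Z \<and> Z \<subseteq> X \<and> P2 H Z \<and> (\<forall>t\<in>gen ` {..<n}. t ` Z = Z)"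
  proof (rule growth[OF finX S_perm _ _ Z1(2) Z1(3)])
    show "gen ` {..<n} \<subseteq> H" using gen_H by blast
    show "\<forall>t\<in>gen ` {..<n}. t permutes X" using gen_permutes by blast
    show "\<forall>t\<in>gen ` {..<n}. \<exists>a b. a \<noteq> b \<and> a \<in> Z1 \<and> b \<in> Z1 \<and> t a \<in> Z1 \<and> t b \<in> Z1"
    proof
      fix t assume "t \<in> gen ` {..<n}"
      then obtain j where j: "j < n" and t: "t = gen j" by blast
      have 1: "t Z0 = E j" using gen_Z0[OF j] t by simp
      have "t (E j) = alpha j (E j)" using alpha_lineZ[OF j E_in[OF j]] lineZ_upd_Z0 t by (simp add: E_def)
      moreover have "alpha j (E j) \<in> Z1"
      proof -
        have "alpha j (E j) \<in> alpha j ` Z1" using EZ[OF j] by blast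
        thus ?thesis using inv1[OF j] by simp
      qed
      ultimately have 2: "t (E j) \<in> Z1" by simp
      have f: "Z0 \<noteq> E j" "Z0 \<in> Z1" "E j \<in> Z1" using E_ne[OF j] Z1(1) EZ[OF j] by auto
      have f4: "t Z0 \<in> Z1" using 1 f(3) by simp
      show "\<exists>a b. a \<noteq> b \<and> a \<in> Z1 \<and> b \<in> Z1 \<and> t a \<in> Z1 \<and> t b \<in> Z1"
        by (intro exI[of _ Z0] exI[of _ "E j"] conjI f f4 2)
    qed
  qed
  then obtain Z where Z: "Z1 \<subseteq> Z" "Z \<subseteq> X" "P2 H Z" "\<forall>t\<in>gen ` {..<n}. t ` Z = Z" by blast
  have "Z0 \<in> Z" using Z(1) Z1(1) by blast
  thus ?thesis using Z(2-4) by blast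
qed

end


context cube3 begin

lemma lineZ_0: "j \<noteq> 0 \<Longrightarrow> lineZ j x \<Longrightarrow> x 0 = lO" using n2 unfolding lineZ_def by simp

lemma reach_nat: "d < q \<Longrightarrow> t < q \<Longrightarrow> (d + (t + q - d)) mod q = t"
proof -
  assume "d < q" "t < q"
  hence "d + (t + q - d) = t + q" by simp
  thus ?thesis using \<open>t < q\<close> by simp
qed

context
  fixes Z assumes Z0Z: "Z0 \<in> Z" and cl: "\<And>j z. j < n \<Longrightarrow> z \<in> Z \<Longrightarrow> gen j z \<in> Z" and ZX: "Z \<subseteq> X"
begin

lemma iterZ: "j < n \<Longrightarrow> z \<in> Z \<Longrightarrow> (gen j ^^ k) z \<in> Z"
  by (induction k) (auto intro: cl)

lemma NL: assumes z: "z \<in> Z" and j: "j < n" and nl: "\<not> lineZ j z" "\<not> spl j z" and a: "a \<in> A"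
  shows "z(j := a) \<in> Z"
proof -
  have zX: "z \<in> X" using z ZX by blast
  have zj: "z j \<in> A" using cube_in zX j by blast
  let ?k = "num a + q - num (z j)"
  have "(gen j ^^ ?k) z = z(j := (rho ^^ ?k) (z j))" using gen_iter[OF j zX] nl by (simp add: Pg_def)
  also have "(rho ^^ ?k) (z j) = e ((num (z j) + ?k) mod q)" by (rule rho_funpow[OF zj])
  also have "(num (z j) + ?k) mod q = num a" by (rule reach_nat[OF num_lt[OF zj] num_lt[OF a]])
  also have "e (num a) = a" using a by simp
  finally show ?thesis using iterZ[OF j z] by metis
qed

lemma LZ: assumes z: "z \<in> Z" and j: "j < n" and lz: "lineZ j z" and zj: "z j \<noteq> lL" and a: "a \<in> A" "a \<noteq> lL"
  shows "z(j := a) \<in> Z"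
proof -
  have zX: "z \<in> X" using z ZX by blast
  have zjA: "z j \<in> A" using cube_in zX j by blast
  have lt: "num b < q - 1" if b: "b \<in> A" "b \<noteq> lL" for b
  proof -
    have "num b \<noteq> q - 1"
    proof
      assume "num b = q - 1" hence "e (num b) = lL" by (simp add: lL_def)
      thus False using b by simp
    qed
    thus ?thesis using num_lt[OF b(1)] by arith
  qed
  have d: "num (z j) < q - 1" using lt zjA zj by blast
  have t: "num a < q - 1" using lt a by blast
  let ?k = "num a + (q - 1) - num (z j)"
  have "(gen j ^^ ?k) z = z(j := (kap ^^ ?k) (z j))" using gen_iter[OF j zX] lz by (simp add: Pg_def)
  also have "(kap ^^ ?k) (z j) = (kap ^^ ?k) (e (num (z j)))" using zjA by simp
  also have "\<dots> = e ((num (z j) + ?k) mod (q - 1))" by (rule kap_funpow[OF d])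
  also have "(num (z j) + ?k) mod (q - 1) = num a"
  proof -
    have "num (z j) + ?k = num a + (q - 1)" using d by simp
    moreover have "(num a + (q - 1)) mod (q - 1) = num a" using t by (simp only: mod_add_self2 mod_less)
    ultimately show ?thesis by simp
  qed
  also have "e (num a) = a" using a by simp
  finally show ?thesis using iterZ[OF j z] by metis
qed

lemma SP0: assumes z: "z \<in> Z" and sp: "spl 0 z" and z0: "z 0 = lI" and a: "a \<in> A" "a \<noteq> lO"
  shows "z(0 := a) \<in> Z"
proof -
  have n0: "0 < n" using n2 by simp
  have zX: "z \<in> X" using z ZX by blast
  have nl: "\<not> lineZ 0 z" using not_both[OF n0 _ sp] by blast
  have a1: "num a \<ge> 1"
  proof (rule ccontr)
    assume "\<not> 1 \<le> num a" hence "num a = 0" by simp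
    hence "e (num a) = lO" by (simp add: lO_def)
    thus False using a by simp
  qed
  have a2: "num a - 1 \<le> q - 2" using num_lt[OF a(1)] a1 by arith
  have "(gen 0 ^^ (num a - 1)) z = z(0 := (k0 ^^ (num a - 1)) (z 0))"
    using gen_iter[OF n0 zX] nl sp by (simp add: Pg_def kk_def)
  also have "(k0 ^^ (num a - 1)) (z 0) = e (num a - 1 + 1)" using k0_funpow[OF a2] z0 by simp
  also have "num a - 1 + 1 = num a" using a1 by simp
  also have "e (num a) = a" using a by simp
  finally show ?thesis using iterZ[OF n0 z] by metis
qed


lemma S3: assumes y: "y \<in> X" "y 0 = lI" shows "y \<in> Z"
proof -
  have Q: "\<forall>y\<in>X. y 0 = lI \<longrightarrow> (\<forall>k. Suc m \<le> k \<longrightarrow> k < n \<longrightarrow> y k = lO) \<longrightarrow> y \<in> Z" for m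
  proof (induction m)
    case 0
    show ?case
    proof (intro ballI impI)
      fix y assume yX: "y \<in> X" and y0: "y 0 = lI" and yk: "\<forall>k. Suc 0 \<le> k \<longrightarrow> k < n \<longrightarrow> y k = lO"
      have n0: "0 < n" using n2 by simp
      have "y = E 0"
      proof (rule cube_eqI[OF yX E_in[OF n0]])
        fix k assume "k < n" thus "y k = E 0 k" using y0 yk unfolding E_def Z0_def by (cases k) auto
      qed
      moreover have "E 0 \<in> Z" using cl[OF n0 Z0Z] gen_Z0[OF n0] by simp
      ultimately show "y \<in> Z" by simp
    qed
  next
    case (Suc m)
    show ?case
    proof (intro ballI impI)
      fix y assume yX: "y \<in> X" and y0: "y 0 = lI" and yk: "\<forall>k. Suc (Suc m) \<le> k \<longrightarrow> k < n \<longrightarrow> y k = lO"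
      show "y \<in> Z"
      proof (cases "Suc m < n")
        case False
        thus ?thesis using Suc.IH yX y0 by auto
      next
        case True
        let ?j = "Suc m"
        let ?y = "y(?j := lO)"
        have y'X: "?y \<in> X" using upd_in[OF yX True OIL_in(1)] .
        have "?y \<in> Z" using Suc.IH y'X y0 yk by auto
        moreover have "\<not> lineZ ?j ?y" using lineZ_0[of ?j ?y] y0 OIL_ne by auto
        moreover have "\<not> spl ?j ?y" using y0 OIL_ne unfolding spl_def by auto
        ultimately have "?y(?j := y ?j) \<in> Z" using NL True cube_in[OF yX True] by blast
        thus "y \<in> Z" by simp
      qed
    qed
  qed
  show ?thesis using Q[of "n - 1"] y by auto
qed

definition P1 where "P1 = Z0(0 := lL)"
definition P2p where "P2p = (\<lambda>k. if k < n then (if k = 0 then lO else lI) else undefined)"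

lemma P2p_in: "P2p \<in> X" unfolding P2p_def cube_mem using OIL_in by auto
lemma P1_in: "P1 \<in> X" unfolding P1_def using upd_in[OF Z0_in _ OIL_in(3)] n2 by simp

lemma S4: assumes x: "x \<in> X" and x1: "x \<noteq> P1" and x2: "alt \<longrightarrow> x \<noteq> P2p" shows "x \<in> Z"
proof -
  have n0: "0 < n" using n2 by simp
  let ?y = "x(0 := lI)"
  have yX: "?y \<in> X" using upd_in[OF x n0 OIL_in(2)] .
  have yZ: "?y \<in> Z" using S3[OF yX] by simp
  have x0: "x 0 \<in> A" using cube_in[OF x n0] .
  have bk: "?y(0 := x 0) = x" by simp
  show ?thesis
  proof (cases "lineZ 0 x")
    case True
    have "x 0 \<noteq> lL"
    proof
      assume h: "x 0 = lL"
      have "x = P1"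
      proof (rule cube_eqI[OF x P1_in])
        fix k assume "k < n" thus "x k = P1 k" using True h unfolding lineZ_def P1_def Z0_def by (cases "k = 0") auto
      qed
      thus False using x1 by simp
    qed
    moreover have "lineZ 0 ?y" using True lineZ_upd by simp
    ultimately have "?y(0 := x 0) \<in> Z" using LZ[OF yZ n0 _ _ x0] OIL_ne by simp
    thus ?thesis using bk by simp
  next
    case F: False
    show ?thesis
    proof (cases "spl 0 x")
      case True
      have al: "alt" using True unfolding spl_def by simp
      have "x 0 \<noteq> lO"
      proof
        assume h: "x 0 = lO"
        have "x = P2p"
        proof (rule cube_eqI[OF x P2p_in])
          fix k assume "k < n" thus "x k = P2p k" using True h unfolding spl_def P2p_def by (cases "k = 0") auto
        qed
        thus False using x2 al by simp
      qed
      moreover have "spl 0 ?y" using True spl_upd by simp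
      ultimately have "?y(0 := x 0) \<in> Z" using SP0[OF yZ _ _ x0] by simp
      thus ?thesis using bk by simp
    next
      case False
      have "\<not> lineZ 0 ?y" "\<not> spl 0 ?y" using F False lineZ_upd spl_upd by simp_all
      hence "?y(0 := x 0) \<in> Z" using NL[OF yZ n0 _ _ x0] by simp
      thus ?thesis using bk by simp
    qed
  qed
qed

lemma S5: "P1 \<in> Z"
proof -
  have n1: "1 < n" using n2 by simp
  let ?w = "P1(1 := lL)"
  have wX: "?w \<in> X" using upd_in[OF P1_in n1 OIL_in(3)] .
  have w0: "?w 0 = lL" unfolding P1_def Z0_def using n2 by simp
  have "?w \<noteq> P1"
  proof
    assume "?w = P1" hence "?w 1 = P1 1" by simp
    thus False using OIL_ne n1 unfolding P1_def Z0_def by simp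
  qed
  moreover have "?w \<noteq> P2p"
  proof
    assume "?w = P2p" hence "?w 0 = P2p 0" by simp
    thus False using OIL_ne w0 n2 unfolding P2p_def by simp
  qed
  ultimately have wZ: "?w \<in> Z" using S4[OF wX] by blast
  have nl: "\<not> lineZ 1 ?w" using lineZ_0[of 1 ?w] w0 OIL_ne by auto
  have "Pg 1 ?w lL = lO" using nl k1_L rho_L by (simp add: Pg_def kk_def)
  moreover have "P1 1 = lO" using n1 unfolding P1_def Z0_def by simp
  ultimately have "gen 1 ?w = P1" using gen_pt[OF wX] by (simp add: fun_upd_idem)
  thus ?thesis using cl[OF n1 wZ] by simp
qed

lemma S6: "P2p \<in> Z"
proof -
  have n1: "1 < n" using n2 by simp
  let ?w = "P2p(1 := lO)"
  have wX: "?w \<in> X" using upd_in[OF P2p_in n1 OIL_in(1)] .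
  have w0: "?w 0 = lO" unfolding P2p_def using n2 by simp
  have "?w \<noteq> P1"
  proof
    assume "?w = P1" hence "?w 0 = P1 0" by simp
    thus False using OIL_ne w0 unfolding P1_def by simp
  qed
  moreover have "?w \<noteq> P2p"
  proof
    assume h: "?w = P2p"
    have "?w 1 = lO" by simp
    moreover have "P2p 1 = lI" using n1 unfolding P2p_def by simp
    ultimately show False using h OIL_ne by metis
  qed
  ultimately have wZ: "?w \<in> Z" using S4[OF wX] by blast
  have ns: "\<not> spl 1 ?w" using w0 OIL_ne unfolding spl_def by auto
  have "Pg 1 ?w lO = lI" using ns kap_O rho_O by (simp add: Pg_def)
  moreover have "P2p 1 = lI" using n1 unfolding P2p_def by simp
  ultimately have "gen 1 ?w = P2p" using gen_pt[OF wX] by (simp add: fun_upd_idem)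
  thus ?thesis using cl[OF n1 wZ] by simp
qed

lemma allZ: "X \<subseteq> Z"
proof
  fix x assume x: "x \<in> X"
  show "x \<in> Z"
  proof (cases "x = P1")
    case True thus ?thesis using S5 by simp
  next
    case False
    show ?thesis
    proof (cases "alt \<and> x = P2p")
      case True thus ?thesis using S6 by simp
    next
      case F2: False
      show ?thesis using S4[OF x False] F2 by blast
    qed
  qed
qed
end

end


context cube3 begin

lemma P2_X: "P2 H X"
proof -
  obtain Z where Z: "Z0 \<in> Z" "Z \<subseteq> X" "P2 H Z" "\<forall>t\<in>gen ` {..<n}. t ` Z = Z" using stage2 by blast
  have cl: "gen j z \<in> Z" if "j < n" "z \<in> Z" for j z
  proof -
    have "gen j ` Z = Z" using Z(4) that(1) by blast
    thus ?thesis using that(2) by blast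
  qed
  have "X \<subseteq> Z" by (rule allZ[OF Z(1) cl Z(2)])
  hence "Z = X" using Z(2) by blast
  thus ?thesis using Z(3) by simp
qed

definition tau1 :: "nat \<Rightarrow> (nat \<Rightarrow> 'a) \<Rightarrow> (nat \<Rightarrow> 'a)" where
  "tau1 j = transpose (Z0(j := lT)) (Z0(j := lL))"
definition B :: "nat \<Rightarrow> nat \<Rightarrow> 'a" where
  "B j = (\<lambda>k. if k < n then (if k = 0 \<and> j \<noteq> 0 then lL else lI) else undefined)"
definition tau2 :: "nat \<Rightarrow> (nat \<Rightarrow> 'a) \<Rightarrow> (nat \<Rightarrow> 'a)" where
  "tau2 j = (if j = 0 then (if alt then transpose ((B 0)(0 := lL)) ((B 0)(0 := lO)) else id)
             else transpose ((B j)(j := lO)) ((B j)(j := lI)))"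
definition sw1 where "sw1 j x = (if lineZ j x then transpose lT lL else id)"
definition sw2 where "sw2 j x = (if spl j x then (if j = 0 then transpose lL lO else transpose lO lI) else id)"

lemma B_in: "B j \<in> X" unfolding B_def cube_mem using OIL_in by auto

lemma tau1_lin: "j < n \<Longrightarrow> tau1 j = lin j (sw1 j)"
proof -
  assume j: "j < n"
  have "tau1 j = lin j (\<lambda>x. if (\<forall>k<n. k \<noteq> j \<longrightarrow> x k = Z0 k) then transpose lT lL else id)"
    unfolding tau1_def by (rule transpose_lin[OF Z0_in j OIL_in(4) OIL_in(3)])
  also have "\<dots> = lin j (sw1 j)" unfolding sw1_def lineZ_def Z0_def by simp
  finally show ?thesis .
qed

lemma tau2_lin: "j < n \<Longrightarrow> tau2 j = lin j (sw2 j)"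
proof -
  assume j: "j < n"
  show ?thesis
  proof (cases "j = 0")
    case True
    show ?thesis
    proof (cases alt)
      case True
      have "tau2 0 = transpose ((B 0)(0 := lL)) ((B 0)(0 := lO))" unfolding tau2_def using True by simp
      also have "\<dots> = lin 0 (\<lambda>x. if (\<forall>k<n. k \<noteq> 0 \<longrightarrow> x k = B 0 k) then transpose lL lO else id)"
        by (rule transpose_lin[OF B_in _ OIL_in(3) OIL_in(1)]) (use n2 in simp)
      also have "\<dots> = lin 0 (sw2 0)" unfolding sw2_def spl_def B_def using True by simp
      finally show ?thesis using \<open>j = 0\<close> by simp
    next
      case False
      have "lin 0 (sw2 0) = lin 0 (\<lambda>_. id)" unfolding sw2_def spl_def using False by simp
      also have "\<dots> = id" by (auto simp: lin_def fun_eq_iff)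
      finally show ?thesis unfolding tau2_def using False \<open>j = 0\<close> by simp
    qed
  next
    case False
    have "tau2 j = lin j (\<lambda>x. if (\<forall>k<n. k \<noteq> j \<longrightarrow> x k = B j k) then transpose lO lI else id)"
      unfolding tau2_def using False by (simp add: transpose_lin[OF B_in j OIL_in(1) OIL_in(2)])
    also have "\<dots> = lin j (sw2 j)"
    proof -
      have "(\<forall>k<n. k \<noteq> j \<longrightarrow> x k = B j k) \<longleftrightarrow> spl j x" for x
        unfolding spl_def B_def using False n2 by auto
      thus ?thesis unfolding sw2_def using False by simp
    qed
    finally show ?thesis .
  qed
qed

lemma sw_perm: "sw1 j x permutes A" "sw2 j x permutes A"
  unfolding sw1_def sw2_def using permutes_swap_id OIL_in by auto

lemma gen_decomp: assumes j: "j < n" shows "gen j = rj j \<circ> tau1 j \<circ> tau2 j"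
proof -
  have L2: "linv j (sw2 j)" unfolding linv_def using sw_perm by (simp add: sw2_def spl_upd)
  have L12: "linv j (\<lambda>x. sw1 j x \<circ> sw2 j x)" unfolding linv_def
    using sw_perm by (simp add: sw1_def sw2_def spl_upd lineZ_upd permutes_compose)
  have "rj j \<circ> tau1 j \<circ> tau2 j = lin j (\<lambda>_. rho) \<circ> (lin j (sw1 j) \<circ> lin j (sw2 j))"
    unfolding rj_def tau1_lin[OF j] tau2_lin[OF j] by (simp add: o_assoc)
  also have "lin j (sw1 j) \<circ> lin j (sw2 j) = lin j (\<lambda>x. sw1 j x \<circ> sw2 j x)"
    by (rule lin_comp[OF L2 j]) (simp add: sw1_def lineZ_upd)
  also have "lin j (\<lambda>_. rho) \<circ> lin j (\<lambda>x. sw1 j x \<circ> sw2 j x) = lin j (\<lambda>x. rho \<circ> (sw1 j x \<circ> sw2 j x))"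
    by (rule lin_comp[OF L12 j]) simp
  also have "\<dots> = gen j" unfolding gen_def
  proof (rule lin_cong)
    fix x assume x: "x \<in> X"
    show "(rho \<circ> (sw1 j x \<circ> sw2 j x)) (x j) = Pg j x (x j)"
    proof (cases "lineZ j x")
      case True
      hence "\<not> spl j x" using not_both[OF j] by blast
      thus ?thesis using True by (simp add: sw1_def sw2_def Pg_def kap_def)
    next
      case False thus ?thesis by (simp add: sw1_def sw2_def Pg_def kk_def k0_def k1_def)
    qed
  qed
  finally show ?thesis by (rule sym)
qed

lemma gen_parity: assumes j: "j < n" shows "evenperm (gen j) \<longleftrightarrow> (alt \<or> j \<noteq> 0)"
proof -
  have p: "permutation (rj j)" "permutation (tau1 j)" "permutation (tau2 j)"
    using rj_permutes[OF j] finX permutation_permutes permutation_swap_id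
    unfolding tau1_def tau2_def by auto
  have e1: "\<not> evenperm (tau1 j)" unfolding tau1_def evenperm_swap
  proof
    assume "Z0(j := lT) = Z0(j := lL)" hence "lT = lL" by (metis fun_upd_same)
    thus False using OIL_ne by simp
  qed
  have e2: "evenperm (tau2 j) \<longleftrightarrow> \<not> (alt \<or> j \<noteq> 0)"
  proof (cases "j = 0")
    case True
    show ?thesis
    proof (cases alt)
      case True
      have ne: "(B 0)(0 := lL) \<noteq> (B 0)(0 := lO)"
      proof
        assume "(B 0)(0 := lL) = (B 0)(0 := lO)" hence "lL = lO" by (metis fun_upd_same)
        thus False using OIL_ne by simp
      qed
      have "tau2 j = transpose ((B 0)(0 := lL)) ((B 0)(0 := lO))" unfolding tau2_def using True \<open>j = 0\<close> by simp
      thus ?thesis using evenperm_swap[of "(B 0)(0 := lL)" "(B 0)(0 := lO)"] ne True by simp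
    next
      case False thus ?thesis unfolding tau2_def using \<open>j = 0\<close> by simp
    qed
  next
    case False
    have ne: "(B j)(j := lO) \<noteq> (B j)(j := lI)"
    proof
      assume "(B j)(j := lO) = (B j)(j := lI)" hence "lO = lI" by (metis fun_upd_same)
      thus False using OIL_ne by simp
    qed
    have "tau2 j = transpose ((B j)(j := lO)) ((B j)(j := lI))" using False by (simp add: tau2_def)
    thus ?thesis using evenperm_swap[of "(B j)(j := lO)" "(B j)(j := lI)"] ne False by simp
  qed
  have "evenperm (gen j) = ((evenperm (rj j) = evenperm (tau1 j)) = evenperm (tau2 j))"
    unfolding gen_decomp[OF j] using p by (simp add: evenperm_comp permutation_compose o_assoc)
  thus ?thesis using rj_even[OF j] e1 e2 by blast
qed

end


locale cube2 = cubeset +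
  assumes qe2: "q = 2" and n3: "3 \<le> n"
begin

definition lO where "lO = e 0"
definition lI where "lI = e 1"
definition Z0 :: "nat \<Rightarrow> 'a" where "Z0 = (\<lambda>k. if k < n then lO else undefined)"

lemma OI_in: "lO \<in> A" "lI \<in> A" unfolding lO_def lI_def using e_in qe2 by auto
lemma OI_ne: "lO \<noteq> lI" unfolding lO_def lI_def using e_inj qe2 by auto
lemma A_OI: "a \<in> A \<Longrightarrow> a = lO \<or> a = lI"
proof -
  assume a: "a \<in> A"
  have "num a < 2" using num_lt[OF a] qe2 by simp
  hence "num a = 0 \<or> num a = 1" by arith
  thus ?thesis using e_num[OF a] unfolding lO_def lI_def by auto
qed
lemma rho_O: "rho lO = lI" unfolding lO_def lI_def using rho_e[of 0] qe2 by simp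
lemma rho_I: "rho lI = lO" unfolding lO_def lI_def using rho_e[of 1] qe2 by simp

lemma Z0_in: "Z0 \<in> X" unfolding cube_mem Z0_def using OI_in by auto

definition s0 :: "(nat \<Rightarrow> 'a) \<Rightarrow> bool" where "s0 x \<longleftrightarrow> (\<forall>k<n. 2 \<le> k \<longrightarrow> x k = lO)"
definition ex :: "nat \<Rightarrow> (nat \<Rightarrow> 'a) \<Rightarrow> bool" where
  "ex j x = (if j = 0 then x 1 = lI \<and> s0 x else if j = 1 then x 0 = lI \<and> s0 x
             else (\<forall>k<n. k \<noteq> 0 \<and> k \<noteq> j \<longrightarrow> x k = lO))"
definition Pq :: "nat \<Rightarrow> (nat \<Rightarrow> 'a) \<Rightarrow> 'a \<Rightarrow> 'a" where "Pq j x = (if ex j x then id else rho)"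
definition gen :: "nat \<Rightarrow> (nat \<Rightarrow> 'a) \<Rightarrow> (nat \<Rightarrow> 'a)" where "gen j = lin j (Pq j)"

lemma ex_upd: "ex j (x(j := a)) = ex j x" unfolding ex_def s0_def by auto
lemma linv_Pq: "linv j (Pq j)" unfolding linv_def Pq_def using ex_upd rho_permutes by simp
lemma gen_permutes: "j < n \<Longrightarrow> gen j permutes X" unfolding gen_def by (rule lin_permutes[OF linv_Pq])
lemma gen_instr: "j < n \<Longrightarrow> instruction A n (gen j)" unfolding gen_def by (rule lin_instr[OF linv_Pq])
lemma gen_pt: "x \<in> X \<Longrightarrow> gen j x = x(j := Pq j x (x j))" by (simp add: gen_def lin_def)
lemma gen_out: "x \<notin> X \<Longrightarrow> gen j x = x" by (simp add: gen_def lin_def)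
lemma gen_in: "j < n \<Longrightarrow> x \<in> X \<Longrightarrow> gen j x \<in> X"
  using permutes_in_image[OF gen_permutes] by simp

definition E0 where "E0 = Z0(0 := lI)"
definition E1 where "E1 = Z0(1 := lI)"

lemma pt_eq: assumes x: "x \<in> X" and s: "s0 x" shows "x = Z0(0 := x 0, 1 := x 1)"
proof (rule cube_eqI[OF x])
  show "Z0(0 := x 0, 1 := x 1) \<in> X" using upd_in[OF upd_in[OF Z0_in]] cube_in[OF x] n3 by simp
  fix k assume "k < n" thus "x k = (Z0(0 := x 0, 1 := x 1)) k" using s unfolding s0_def Z0_def by auto
qed

lemma s0_Z0: "s0 (Z0(0 := a, 1 := b))" unfolding s0_def Z0_def by simp

definition pt where "pt a b = Z0(0 := a, 1 := b)"

lemma pt_in: "a \<in> A \<Longrightarrow> b \<in> A \<Longrightarrow> pt a b \<in> X"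
  unfolding pt_def using upd_in[OF upd_in[OF Z0_in]] n3 by simp
lemma pt_eq_iff: "pt a b = pt a' b' \<longleftrightarrow> a = a' \<and> b = b'"
proof
  assume h: "pt a b = pt a' b'"
  have "pt a b 0 = pt a' b' 0" "pt a b 1 = pt a' b' 1" using h by simp_all
  thus "a = a' \<and> b = b'" unfolding pt_def by simp
qed simp
lemma s0_pt: "s0 (pt a b)" unfolding pt_def s0_def Z0_def by simp
lemma pt_01: "pt a b 0 = a" "pt a b 1 = b" unfolding pt_def by simp_all
lemma pts: "Z0 = pt lO lO" "E0 = pt lI lO" "E1 = pt lO lI"
proof -
  show "Z0 = pt lO lO" unfolding pt_def by (rule ext) (use n3 in \<open>simp add: Z0_def\<close>)
  show "E0 = pt lI lO" unfolding pt_def E0_def by (rule ext) (use n3 in \<open>simp add: Z0_def\<close>)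
  show "E1 = pt lO lI" unfolding pt_def E1_def by (rule ext) (use n3 in \<open>simp add: Z0_def\<close>)
qed
lemma g0_pt: "a \<in> A \<Longrightarrow> b \<in> A \<Longrightarrow> gen 0 (pt a b) = (if b = lI then pt a b else pt (rho a) b)"
  using gen_pt[OF pt_in] s0_pt by (simp add: Pq_def ex_def pt_01) (simp add: pt_def fun_upd_twist)
lemma g1_pt: "a \<in> A \<Longrightarrow> b \<in> A \<Longrightarrow> gen 1 (pt a b) = (if a = lI then pt a b else pt a (rho b))"
  using gen_pt[OF pt_in] s0_pt by (simp add: Pq_def ex_def pt_01) (simp add: pt_def)
lemma rho_rho: assumes a: "a \<in> A" shows "rho (rho a) = a" using A_OI[OF a] rho_O rho_I by auto
lemma rho_in: assumes a: "a \<in> A" shows "rho a \<in> A" using A_OI[OF a] rho_O rho_I OI_in by auto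
lemma s0_upd: "j < 2 \<Longrightarrow> s0 (x(j := a)) = s0 x" unfolding s0_def by auto
lemma s0_upd01[simp]: "s0 (x(0 := a)) = s0 x" "s0 (x(Suc 0 := a)) = s0 x" unfolding s0_def by auto
lemma gen_ns: assumes x: "x \<in> X" and s: "\<not> s0 x" shows "gen 0 x = x(0 := rho (x 0))" "gen 1 x = x(1 := rho (x 1))"
  using gen_pt[OF x] s by (simp_all add: Pq_def ex_def)

lemma cyc: "(gen 0 \<circ> gen 1) \<circ> (gen 0 \<circ> gen 1) = transpose Z0 E1 \<circ> transpose Z0 E0"
proof (rule ext)
  fix x
  have in0: "Z0 \<in> X" "E0 \<in> X" "E1 \<in> X" unfolding E0_def E1_def using Z0_in upd_in[OF Z0_in] OI_in n3 by auto
  show "((gen 0 \<circ> gen 1) \<circ> (gen 0 \<circ> gen 1)) x = (transpose Z0 E1 \<circ> transpose Z0 E0) x"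
  proof (cases "x \<in> X")
    case False
    hence "x \<noteq> Z0" "x \<noteq> E0" "x \<noteq> E1" using in0 by auto
    thus ?thesis using False gen_out by simp
  next
    case xX: True
    have x01: "x 0 \<in> A" "x 1 \<in> A" using cube_in[OF xX] n3 by auto
    show ?thesis
    proof (cases "s0 x")
      case False
      have "x \<noteq> Z0" "x \<noteq> E0" "x \<noteq> E1" using False s0_Z0[of lO lO] s0_Z0[of lI lO] s0_Z0[of lO lI]
        unfolding E0_def E1_def by (auto simp: Z0_def s0_def)
      moreover have "((gen 0 \<circ> gen 1) \<circ> (gen 0 \<circ> gen 1)) x = x"
      proof -
        have n01: "0 < n" "1 < n" using n3 by auto
        let ?y1 = "x(1 := rho (x 1))"
        have y1: "gen 1 x = ?y1" "?y1 \<in> X" "\<not> s0 ?y1" "?y1 0 = x 0" "?y1 1 = rho (x 1)"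
          using gen_ns[OF xX False] upd_in[OF xX n01(2) rho_in[OF x01(2)]] False s0_upd[of 1] by auto
        let ?y2 = "?y1(0 := rho (x 0))"
        have y2: "gen 0 ?y1 = ?y2" "?y2 \<in> X" "\<not> s0 ?y2" "?y2 0 = rho (x 0)" "?y2 1 = rho (x 1)"
          using gen_ns[OF y1(2) y1(3)] upd_in[OF y1(2) n01(1) rho_in[OF x01(1)]] y1(3) s0_upd[of 0] y1(4) by auto
        let ?y3 = "?y2(1 := x 1)"
        have y3: "gen 1 ?y2 = ?y3" "?y3 \<in> X" "\<not> s0 ?y3" "?y3 0 = rho (x 0)"
          using gen_ns[OF y2(2) y2(3)] y2 rho_rho[OF x01(2)] upd_in[OF y2(2) n01(2) x01(2)] False by auto
        have y4: "gen 0 ?y3 = x"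
          using gen_ns[OF y3(2) y3(3)] y3(4) rho_rho[OF x01(1)] by (simp add: fun_upd_twist)
        show ?thesis using y1(1) y2(1) y3(1) y4 by simp
      qed
      ultimately show ?thesis by simp
    next
      case True
      have xp: "x = pt (x 0) (x 1)" using pt_eq[OF xX True] by (simp add: pt_def)
      have "x 0 = lO \<or> x 0 = lI" "x 1 = lO \<or> x 1 = lI" using A_OI x01 by auto
      hence "x = pt lO lO \<or> x = pt lI lO \<or> x = pt lO lI \<or> x = pt lI lI" using xp by auto
      thus ?thesis using g0_pt g1_pt OI_in rho_O rho_I OI_ne pts pt_eq_iff rho_in by auto
    qed
  qed
qed


abbreviation H where "H \<equiv> perm_gen (gen ` {..<n})"
lemma S_perm: "\<forall>s\<in>gen ` {..<n}. s permutes X" using gen_permutes by blast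
lemma gen_H: "j < n \<Longrightarrow> gen j \<in> H" by (rule perm_gen.gen_base) simp

lemma E_in: "E0 \<in> X" "E1 \<in> X" using pts pt_in OI_in by auto
lemma E_ne: "Z0 \<noteq> E0" "Z0 \<noteq> E1" "E0 \<noteq> E1" using pts pt_eq_iff OI_ne by auto

lemma three: "P2 H {Z0, E0, E1}"
proof -
  have n01: "0 < n" "1 < n" using n3 by auto
  have "(gen 0 \<circ> gen 1) \<circ> (gen 0 \<circ> gen 1) \<in> H"
    using gen_H[OF n01(1)] gen_H[OF n01(2)] by (meson perm_gen.gen_comp)
  hence inH: "transpose Z0 E1 \<circ> transpose Z0 E0 \<in> H" using cyc by simp
  show ?thesis by (rule P2_three[OF E_ne inH])
qed

lemma g_Z0: "gen 0 Z0 = E0" "gen 0 E0 = Z0" "gen 1 Z0 = E1" "gen 1 E1 = Z0"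
  using g0_pt g1_pt pts OI_in OI_ne rho_O rho_I by auto

lemma gj_fix: assumes j: "2 \<le> j" "j < n" shows "gen j Z0 = Z0" "gen j E0 = E0"
proof -
  have "ex j Z0" "ex j E0" using j unfolding ex_def E0_def Z0_def by auto
  thus "gen j Z0 = Z0" "gen j E0 = E0" using gen_pt Z0_in E_in by (simp_all add: Pq_def)
qed

lemma stage: "\<exists>Z. Z0 \<in> Z \<and> Z \<subseteq> X \<and> P2 H Z \<and> (\<forall>t\<in>gen ` {..<n}. t ` Z = Z)"
proof -
  have "\<exists>Z. {Z0, E0, E1} \<subseteq> Z \<and> Z \<subseteq> X \<and> P2 H Z \<and> (\<forall>t\<in>gen ` {..<n}. t ` Z = Z)"
  proof (rule growth[OF finX S_perm _ _ _ three])
    show "gen ` {..<n} \<subseteq> H" using gen_H by blast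
    show "\<forall>t\<in>gen ` {..<n}. t permutes X" using gen_permutes by blast
    show "{Z0, E0, E1} \<subseteq> X" using Z0_in E_in by auto
    show "\<forall>t\<in>gen ` {..<n}. \<exists>a b. a \<noteq> b \<and> a \<in> {Z0, E0, E1} \<and> b \<in> {Z0, E0, E1} \<and>
           t a \<in> {Z0, E0, E1} \<and> t b \<in> {Z0, E0, E1}"
    proof
      fix t assume "t \<in> gen ` {..<n}"
      then obtain j where j: "j < n" and t: "t = gen j" by blast
      show "\<exists>a b. a \<noteq> b \<and> a \<in> {Z0, E0, E1} \<and> b \<in> {Z0, E0, E1} \<and> t a \<in> {Z0, E0, E1} \<and> t b \<in> {Z0, E0, E1}"
      proof (cases "j = 0")
        case True
        have f: "t Z0 \<in> {Z0, E0, E1}" "t E0 \<in> {Z0, E0, E1}" using g_Z0 t True by auto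
        have g: "Z0 \<in> {Z0, E0, E1}" "E0 \<in> {Z0, E0, E1}" by simp_all
        show ?thesis by (intro exI[of _ Z0] exI[of _ E0] conjI E_ne f g)
      next
        case j0: False
        show ?thesis
        proof (cases "j = 1")
          case True
          have f: "t Z0 \<in> {Z0, E0, E1}" "t E1 \<in> {Z0, E0, E1}" using g_Z0 t True by auto
          have g: "Z0 \<in> {Z0, E0, E1}" "E1 \<in> {Z0, E0, E1}" by simp_all
          show ?thesis by (intro exI[of _ Z0] exI[of _ E1] conjI E_ne f g)
        next
          case False
          have f: "t Z0 \<in> {Z0, E0, E1}" "t E0 \<in> {Z0, E0, E1}" using gj_fix[of j] j j0 False t by auto
          have g: "Z0 \<in> {Z0, E0, E1}" "E0 \<in> {Z0, E0, E1}" by simp_all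
          show ?thesis by (intro exI[of _ Z0] exI[of _ E0] conjI E_ne f g)
        qed
      qed
    qed
  qed
  then obtain Z where Z: "{Z0, E0, E1} \<subseteq> Z" "Z \<subseteq> X" "P2 H Z" "\<forall>t\<in>gen ` {..<n}. t ` Z = Z" by blast
  have "Z0 \<in> Z" using Z(1) by blast
  thus ?thesis using Z(2-4) by blast
qed

context
  fixes Z assumes Z0Z: "Z0 \<in> Z" and cl: "\<And>j z. j < n \<Longrightarrow> z \<in> Z \<Longrightarrow> gen j z \<in> Z" and ZX: "Z \<subseteq> X"
begin

lemma NL: assumes z: "z \<in> Z" and j: "j < n" and ne: "\<not> ex j z" and a: "a \<in> A"
  shows "z(j := a) \<in> Z"
proof -
  have zX: "z \<in> X" using z ZX by blast
  have zj: "z j \<in> A" using cube_in zX j by blast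
  have g: "gen j z = z(j := rho (z j))" using gen_pt[OF zX] ne by (simp add: Pq_def)
  show ?thesis
  proof (cases "a = z j")
    case True thus ?thesis using z by simp
  next
    case False
    hence "a = rho (z j)" using A_OI[OF a] A_OI[OF zj] rho_O rho_I by auto
    thus ?thesis using cl[OF j z] g by simp
  qed
qed

lemma E1Z: "E1 \<in> Z" using cl[of 1 Z0] Z0Z g_Z0 n3 by simp

lemma SA: assumes y: "y \<in> X" "y 0 = lO" "y 1 = lI" shows "y \<in> Z"
proof -
  have Q: "\<forall>y\<in>X. y 0 = lO \<longrightarrow> y 1 = lI \<longrightarrow> (\<forall>k. Suc (Suc m) \<le> k \<longrightarrow> k < n \<longrightarrow> y k = lO) \<longrightarrow> y \<in> Z" for m
  proof (induction m)
    case 0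
    show ?case
    proof (intro ballI impI)
      fix y assume yX: "y \<in> X" and y0: "y 0 = lO" and y1: "y 1 = lI" and yk: "\<forall>k. Suc (Suc 0) \<le> k \<longrightarrow> k < n \<longrightarrow> y k = lO"
      have "y = E1"
      proof (rule cube_eqI[OF yX E_in(2)])
        fix k assume k: "k < n"
        show "y k = E1 k"
        proof (cases "k < 2")
          case True hence "k = 0 \<or> k = 1" by arith
          thus ?thesis using y0 y1 k unfolding E1_def Z0_def by auto
        next
          case False thus ?thesis using yk k unfolding E1_def Z0_def by auto
        qed
      qed
      thus "y \<in> Z" using E1Z by simp
    qed
  next
    case (Suc m)
    show ?case
    proof (intro ballI impI)
      fix y assume yX: "y \<in> X" and y0: "y 0 = lO" and y1: "y 1 = lI" and yk: "\<forall>k. Suc (Suc (Suc m)) \<le> k \<longrightarrow> k < n \<longrightarrow> y k = lO"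
      show "y \<in> Z"
      proof (cases "Suc (Suc m) < n")
        case False thus ?thesis using Suc.IH yX y0 y1 by auto
      next
        case True
        let ?j = "Suc (Suc m)"
        let ?y = "y(?j := lO)"
        have y'X: "?y \<in> X" using upd_in[OF yX True OI_in(1)] .
        have "?y \<in> Z" using Suc.IH y'X y0 y1 yk by auto
        moreover have "\<not> ex ?j ?y"
        proof
          assume "ex ?j ?y"
          hence "?y 1 = lO" using n3 unfolding ex_def by auto
          thus False using y1 OI_ne by simp
        qed
        ultimately have "?y(?j := y ?j) \<in> Z" using NL True cube_in[OF yX True] by blast
        thus "y \<in> Z" by simp
      qed
    qed
  qed
  show ?thesis using Q[of "n - 2"] y by auto
qed

lemma nsZ: assumes x: "x \<in> X" and ns: "\<not> s0 x" shows "x \<in> Z"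
proof -
  have n01: "0 < n" "1 < n" using n3 by auto
  have x01: "x 0 \<in> A" "x 1 \<in> A" using cube_in[OF x] n01 by auto
  let ?y = "x(0 := lO, 1 := lI)"
  have yX: "?y \<in> X" using upd_in[OF upd_in[OF x n01(1) OI_in(1)] n01(2) OI_in(2)] .
  have yZ: "?y \<in> Z" using SA[OF yX] by simp
  have "\<not> ex 1 ?y" using ns OI_ne unfolding ex_def by simp
  hence y2: "?y(1 := x 1) \<in> Z" using NL[OF yZ n01(2) _ x01(2)] by simp
  have "\<not> ex 0 (?y(1 := x 1))" using ns unfolding ex_def by simp
  hence "?y(1 := x 1, 0 := x 0) \<in> Z" using NL[OF y2 n01(1) _ x01(1)] by simp
  moreover have "?y(1 := x 1, 0 := x 0) = x" by (simp add: fun_upd_twist)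
  ultimately show ?thesis by simp
qed

lemma allZ: "X \<subseteq> Z"
proof
  fix x assume x: "x \<in> X"
  have n01: "0 < n" "1 < n" "2 < n" using n3 by auto
  have x01: "x 0 \<in> A" "x 1 \<in> A" using cube_in[OF x] n01 by auto
  show "x \<in> Z"
  proof (cases "s0 x")
    case False thus ?thesis using nsZ[OF x] by simp
  next
    case True
    have xp: "x = pt (x 0) (x 1)" using pt_eq[OF x True] by (simp add: pt_def)
    have "x 0 = lO \<or> x 0 = lI" "x 1 = lO \<or> x 1 = lI" using A_OI x01 by auto
    hence c: "x = pt lO lO \<or> x = pt lI lO \<or> x = pt lO lI \<or> x = pt lI lI" using xp by auto
    have pZ: "pt lO lO \<in> Z" "pt lI lO \<in> Z" "pt lO lI \<in> Z"
      using Z0Z E1Z cl[OF n01(1) Z0Z] g_Z0 pts by auto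
    have "pt lI lI \<in> Z"
    proof -
      let ?w = "(pt lI lI)(2 := lI)"
      have wX: "?w \<in> X" using upd_in[OF pt_in[OF OI_in(2) OI_in(2)] n01(3) OI_in(2)] .
      have "\<not> s0 ?w"
      proof
        assume "s0 ?w" hence "?w 2 = lO" using n01(3) unfolding s0_def by blast
        thus False using OI_ne by simp
      qed
      hence wZ: "?w \<in> Z" using nsZ[OF wX] by simp
      have "\<not> ex 2 ?w"
      proof
        assume "ex 2 ?w" hence "?w 1 = lO" using n01(2) unfolding ex_def by simp
        thus False using OI_ne by (simp add: pt_def)
      qed
      hence "?w(2 := lO) \<in> Z" using NL[OF wZ n01(3) _ OI_in(1)] by simp
      moreover have "?w(2 := lO) = pt lI lI" unfolding pt_def Z0_def using n01 by (auto simp: fun_eq_iff)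
      ultimately show ?thesis by simp
    qed
    thus ?thesis using c pZ by auto
  qed
qed

end

lemma P2_X: "P2 H X"
proof -
  obtain Z where Z: "Z0 \<in> Z" "Z \<subseteq> X" "P2 H Z" "\<forall>t\<in>gen ` {..<n}. t ` Z = Z" using stage by blast
  have cl: "gen j z \<in> Z" if "j < n" "z \<in> Z" for j z
  proof -
    have "gen j ` Z = Z" using Z(4) that(1) by blast
    thus ?thesis using that(2) by blast
  qed
  have "X \<subseteq> Z" by (rule allZ[OF Z(1) cl Z(2)])
  hence "Z = X" using Z(2) by blast
  thus ?thesis using Z(3) by simp
qed

lemma gen0_odd: "\<not> evenperm (gen 0)"
proof -
  have n01: "0 < n" "1 < n" using n3 by auto
  let ?E01 = "E1(0 := lI)"
  have E1_0: "E1(0 := lO) = E1" unfolding E1_def Z0_def using n01 by (auto simp: fun_eq_iff)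
  have tl: "transpose E1 ?E01 = lin 0 (\<lambda>x. if (\<forall>k<n. k \<noteq> 0 \<longrightarrow> x k = E1 k) then transpose lO lI else id)"
    using transpose_lin[OF E_in(2) n01(1) OI_in(1) OI_in(2)] E1_0 by simp
  have cond: "(\<forall>k<n. k \<noteq> 0 \<longrightarrow> x k = E1 k) \<longleftrightarrow> ex 0 x" for x
  proof
    assume h: "\<forall>k<n. k \<noteq> 0 \<longrightarrow> x k = E1 k"
    show "ex 0 x" using h n01 unfolding ex_def s0_def E1_def Z0_def by auto
  next
    assume h: "ex 0 x"
    show "\<forall>k<n. k \<noteq> 0 \<longrightarrow> x k = E1 k"
    proof (intro allI impI)
      fix k assume k: "k < n" "k \<noteq> 0"
      show "x k = E1 k"
      proof (cases "k = 1")
        case True thus ?thesis using h unfolding ex_def E1_def by simp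
      next
        case False thus ?thesis using h k unfolding ex_def s0_def E1_def Z0_def by auto
      qed
    qed
  qed
  define sw where "sw x = (if ex 0 x then transpose lO lI else id)" for x
  have tl2: "transpose E1 ?E01 = lin 0 sw" unfolding tl sw_def cond by simp
  have Lsw: "linv 0 sw" unfolding linv_def sw_def using ex_upd permutes_swap_id[OF OI_in] by simp
  have "rj 0 \<circ> transpose E1 ?E01 = lin 0 (\<lambda>x. rho \<circ> sw x)"
    unfolding rj_def tl2 by (rule lin_comp[OF Lsw n01(1)]) simp
  also have "\<dots> = gen 0" unfolding gen_def
  proof (rule lin_cong)
    fix x assume x: "x \<in> X"
    have x0: "x 0 \<in> A" using cube_in[OF x n01(1)] .
    show "(rho \<circ> sw x) (x 0) = Pq 0 x (x 0)"
    proof (cases "ex 0 x")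
      case True
      have "rho (transpose lO lI (x 0)) = x 0" using A_OI[OF x0] rho_O rho_I OI_ne by auto
      thus ?thesis using True by (simp add: sw_def Pq_def)
    next
      case False thus ?thesis by (simp add: sw_def Pq_def)
    qed
  qed
  finally have dec: "gen 0 = rj 0 \<circ> transpose E1 ?E01" by (rule sym)
  have ne: "E1 \<noteq> ?E01"
  proof
    assume "E1 = ?E01" hence "E1 0 = ?E01 0" by simp
    thus False using OI_ne n01 unfolding E1_def Z0_def by simp
  qed
  have p: "permutation (rj 0)" using rj_permutes[OF n01(1)] finX permutation_permutes by blast
  have "evenperm (gen 0) = (evenperm (rj 0) = evenperm (transpose E1 ?E01))"
    unfolding dec by (rule evenperm_comp[OF p permutation_swap_id])
  thus ?thesis using rj_even[OF n01(1)] evenperm_swap[of E1 ?E01] ne by simp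
qed

end


lemma final_sym:
  assumes fin: "finite X" and S: "\<forall>s\<in>S. s permutes X" and P: "P2 (perm_gen S) X"
    and x01: "x0 \<in> X" "x1 \<in> X" "x0 \<noteq> x1" and h: "h \<in> perm_gen S" "\<not> evenperm h"
  shows "perm_gen S = {p. p permutes X}"
proof
  show "perm_gen S \<subseteq> {p. p permutes X}" using pg_permutes[OF S] by blast
  show "{p. p permutes X} \<subseteq> perm_gen S" using gen_alt_sym(2)[OF fin S P x01 h] by blast
qed

lemma final_alt:
  assumes fin: "finite X" and S: "\<forall>s\<in>S. s permutes X \<and> evenperm s" and P: "P2 (perm_gen S) X"
    and x01: "x0 \<in> X" "x1 \<in> X" "x0 \<noteq> x1"
  shows "perm_gen S = {p. p permutes X \<and> evenperm p}"
proof
  have S': "\<forall>s\<in>S. s permutes X" using S by blast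
  show "perm_gen S \<subseteq> {p. p permutes X \<and> evenperm p}" using pg_permutes[OF S'] pg_even[OF fin S] by blast
  show "{p. p permutes X \<and> evenperm p} \<subseteq> perm_gen S" using gen_alt_sym(1)[OF fin S' P x01] by blast
qed

theorem theorem1:
  fixes A :: "'a set" and n :: nat
  assumes "finite A" and "card A \<ge> 2" and "n \<ge> 2"
  shows "(\<not> (card A = 2 \<and> n = 2) \<longrightarrow>
           (\<exists>g :: nat \<Rightarrow> ((nat \<Rightarrow> 'a) \<Rightarrow> (nat \<Rightarrow> 'a)).
              (\<forall>i<n. instruction A n (g i)) \<and> perm_gen (g ` {..<n}) = Sym_set A n))
       \<and> (card A \<ge> 3 \<longrightarrow>
           (\<exists>g :: nat \<Rightarrow> ((nat \<Rightarrow> 'a) \<Rightarrow> (nat \<Rightarrow> 'a)).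
              (\<forall>i<n. instruction A n (g i) \<and> evenperm (g i)) \<and>
              perm_gen (g ` {..<n}) = Alt_set A n))"
proof -
  define q where "q = card A"
  obtain e where e: "bij_betw e {0..<q} A" using ex_bij_betw_nat_finite[OF assms(1)] unfolding q_def by blast
  have e': "bij_betw e {..<q} A" using e by (simp add: atLeast0LessThan)
  have q2: "2 \<le> q" using assms(2) q_def by simp
  have partA: "\<exists>g :: nat \<Rightarrow> ((nat \<Rightarrow> 'a) \<Rightarrow> (nat \<Rightarrow> 'a)).
              (\<forall>i<n. instruction A n (g i)) \<and> perm_gen (g ` {..<n}) = Sym_set A n"
    if nt: "\<not> (q = 2 \<and> n = 2)"
  proof (cases "q = 2")
    case True
    hence n3: "3 \<le> n" using nt assms(3) by auto
    interpret c: cube2 A n q e by unfold_locales (use e' q2 assms(3) True n3 in auto)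
    have n0: "0 < n" using n3 by simp
    have "perm_gen (c.gen ` {..<n}) = {p. p permutes cube A n}"
    proof (rule final_sym[OF c.finX c.S_perm c.P2_X])
      show "c.Z0 \<in> cube A n" "c.E0 \<in> cube A n" "c.Z0 \<noteq> c.E0" using c.Z0_in c.E_in c.E_ne by auto
      show "c.gen 0 \<in> c.H" using c.gen_H[OF n0] .
      show "\<not> evenperm (c.gen 0)" by (rule c.gen0_odd)
    qed
    thus ?thesis using c.gen_instr unfolding Sym_set_def by blast
  next
    case False
    hence q3: "3 \<le> q" using q2 by simp
    interpret c: cube3 A n q e False by unfold_locales (use e' q2 assms(3) q3 in auto)
    have n0: "0 < n" "1 < n" using assms(3) by auto
    have "perm_gen (c.gen ` {..<n}) = {p. p permutes cube A n}"
    proof (rule final_sym[OF c.finX c.S_perm c.P2_X])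
      show "c.Z0 \<in> cube A n" "c.E 0 \<in> cube A n" "c.Z0 \<noteq> c.E 0" using c.Z0_in c.E_in[OF n0(1)] c.E_ne[OF n0(1)] by auto
      show "c.gen 0 \<in> c.H" using c.gen_H[OF n0(1)] .
      show "\<not> evenperm (c.gen 0)" using c.gen_parity[OF n0(1)] by simp
    qed
    thus ?thesis using c.gen_instr unfolding Sym_set_def by blast
  qed
  have partB: "\<exists>g :: nat \<Rightarrow> ((nat \<Rightarrow> 'a) \<Rightarrow> (nat \<Rightarrow> 'a)).
              (\<forall>i<n. instruction A n (g i) \<and> evenperm (g i)) \<and> perm_gen (g ` {..<n}) = Alt_set A n"
    if q3: "3 \<le> q"
  proof -
    interpret c: cube3 A n q e True by unfold_locales (use e' q2 assms(3) q3 in auto)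
    have n0: "0 < n" using assms(3) by auto
    have ev: "\<forall>s\<in>c.gen ` {..<n}. s permutes cube A n \<and> evenperm s"
      using c.gen_permutes c.gen_parity by auto
    have "perm_gen (c.gen ` {..<n}) = {p. p permutes cube A n \<and> evenperm p}"
    proof (rule final_alt[OF c.finX ev c.P2_X])
      show "c.Z0 \<in> cube A n" "c.E 0 \<in> cube A n" "c.Z0 \<noteq> c.E 0" using c.Z0_in c.E_in[OF n0] c.E_ne[OF n0] by auto
    qed
    moreover have "\<forall>i<n. instruction A n (c.gen i) \<and> evenperm (c.gen i)"
      using c.gen_instr c.gen_parity by auto
    ultimately show ?thesis unfolding Alt_set_def by blast
  qed
  show ?thesis using partA partB unfolding q_def by blast
qed


end
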